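(* Let $G$ and $H$ be finite, simple, connected graphs, each of order at least $2$. The direct product $G \times H$ is well-dominated if and only if $G\times H$ is isomorphic to $K_3\times K_3$, or $G\times H$ is isomorphic to $K_2\times C_4$, or $G \times H$ is isomorphic to $K_2 \times (F \odot K_1)$ for some connected graph $F$.
   Context: A set $D$ of vertices of a graph is dominating if every vertex is in $D$ or adjacent to a vertex of $D$. A graph is well-dominated if every minimal (with respect to inclusion) dominating set is a minimum dominating set, i.e. $\gamma(G)=\Gamma(G)$, where $\gamma$ and $\Gamma$ denote the smallest and largest cardinality of a minimal dominating set. The direct product $G\times H$ has vertex set $V(G)\times V(H)$, with $(g_1,h_1)$ adjacent to $(g_2,h_2)$ iff $g_1g_2\in E(G)$ and $h_1h_2\in E(H)$. The corona $F\odot K_1$ is obtained from $F$ by adding, for each vertex $u$ of $F$, a new vertex $u'$ and the edge $uu'$. The paper's standing assumption is that all graphs are finite, undirected, simple and of order at least $2$. *)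

theory Defs
  imports Main
begin

definition simple_graph :: "'a set \<Rightarrow> ('a \<times> 'a) set \<Rightarrow> bool" where
  "simple_graph V E \<longleftrightarrow> finite V \<and> E \<subseteq> V \<times> V \<and> sym E \<and> irrefl E"

definition connected_graph :: "'a set \<Rightarrow> ('a \<times> 'a) set \<Rightarrow> bool" where
  "connected_graph V E \<longleftrightarrow> V \<noteq> {} \<and> (\<forall>u\<in>V. \<forall>v\<in>V. (u, v) \<in> E\<^sup>*)"

definition dominating :: "'a set \<Rightarrow> ('a \<times> 'a) set \<Rightarrow> 'a set \<Rightarrow> bool" where
  "dominating V E D \<longleftrightarrow> D \<subseteq> V \<and> (\<forall>v\<in>V. v \<in> D \<or> (\<exists>u\<in>D. (u, v) \<in> E))"

definition minimal_dominating :: "'a set \<Rightarrow> ('a \<times> 'a) set \<Rightarrow> 'a set \<Rightarrow> bool" where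
  "minimal_dominating V E D \<longleftrightarrow> dominating V E D \<and> (\<forall>D'. D' \<subset> D \<longrightarrow> \<not> dominating V E D')"

definition minimum_dominating :: "'a set \<Rightarrow> ('a \<times> 'a) set \<Rightarrow> 'a set \<Rightarrow> bool" where
  "minimum_dominating V E D \<longleftrightarrow> dominating V E D \<and> (\<forall>D'. dominating V E D' \<longrightarrow> card D \<le> card D')"

definition well_dominated :: "'a set \<Rightarrow> ('a \<times> 'a) set \<Rightarrow> bool" where
  "well_dominated V E \<longleftrightarrow> (\<forall>D. minimal_dominating V E D \<longrightarrow> minimum_dominating V E D)"

definition graph_iso :: "'a set \<Rightarrow> ('a \<times> 'a) set \<Rightarrow> 'b set \<Rightarrow> ('b \<times> 'b) set \<Rightarrow> bool" where
  "graph_iso V1 E1 V2 E2 \<longleftrightarrow> (\<exists>f. bij_betw f V1 V2 \<and>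
      (\<forall>u\<in>V1. \<forall>v\<in>V1. (u, v) \<in> E1 \<longleftrightarrow> (f u, f v) \<in> E2))"

definition dprod_verts :: "'a set \<Rightarrow> 'b set \<Rightarrow> ('a \<times> 'b) set" where
  "dprod_verts V1 V2 = V1 \<times> V2"

definition dprod_edges :: "('a \<times> 'a) set \<Rightarrow> ('b \<times> 'b) set \<Rightarrow> (('a \<times> 'b) \<times> ('a \<times> 'b)) set" where
  "dprod_edges E1 E2 = {((g1, h1), (g2, h2)). (g1, g2) \<in> E1 \<and> (h1, h2) \<in> E2}"

definition K_verts :: "nat \<Rightarrow> nat set" where
  "K_verts n = {0..<n}"

definition K_edges :: "nat \<Rightarrow> (nat \<times> nat) set" where
  "K_edges n = {(i, j). i < n \<and> j < n \<and> i \<noteq> j}"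

definition C_verts :: "nat \<Rightarrow> nat set" where
  "C_verts n = {0..<n}"

definition C_edges :: "nat \<Rightarrow> (nat \<times> nat) set" where
  "C_edges n = {(i, j). i < n \<and> j < n \<and> (j = (i + 1) mod n \<or> i = (j + 1) mod n)}"

text \<open>Corona F \<odot> K_1: vertex (u, False) is the original u, (u, True) is the new pendant u'.\<close>
definition corona_verts :: "'a set \<Rightarrow> ('a \<times> bool) set" where
  "corona_verts V = V \<times> UNIV"

definition corona_edges :: "'a set \<Rightarrow> ('a \<times> 'a) set \<Rightarrow> (('a \<times> bool) \<times> ('a \<times> bool)) set" where
  "corona_edges V E =
     {((u, False), (v, False)) | u v. (u, v) \<in> E}
     \<union> {((u, False), (u, True)) | u. u \<in> V}
     \<union> {((u, True), (u, False)) | u. u \<in> V}"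

end

theory Submission
  imports Defs
begin

lemma dprod_edges_iff[simp]:
  "((a,b),(c,d)) \<in> dprod_edges E1 E2 \<longleftrightarrow> (a,c) \<in> E1 \<and> (b,d) \<in> E2"
  by (simp add: dprod_edges_def)

lemma dominating_mono:
  "dominating V E D \<Longrightarrow> D \<subseteq> D' \<Longrightarrow> D' \<subseteq> V \<Longrightarrow> dominating V E D'"
  unfolding dominating_def by blast

lemma minimal_dominating_iff:
  "minimal_dominating V E D \<longleftrightarrow> dominating V E D \<and> (\<forall>x\<in>D. \<not> dominating V E (D - {x}))"
proof
  assume "minimal_dominating V E D" then show "dominating V E D \<and> (\<forall>x\<in>D. \<not> dominating V E (D - {x}))"
    unfolding minimal_dominating_def by blast
next
  assume a: "dominating V E D \<and> (\<forall>x\<in>D. \<not> dominating V E (D - {x}))"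
  have "\<not> dominating V E D'" if "D' \<subset> D" for D'
  proof
    assume d: "dominating V E D'"
    from that obtain x where x: "x \<in> D" "x \<notin> D'" by blast
    have "D - {x} \<subseteq> V" using a unfolding dominating_def by blast
    have "dominating V E (D - {x})" using dominating_mono[OF d _ \<open>D - {x} \<subseteq> V\<close>] that x by blast
    with a x show False by blast
  qed
  with a show "minimal_dominating V E D" unfolding minimal_dominating_def by blast
qed

lemma exists_minimal_sub:
  assumes "finite V" "dominating V E D"
  shows "\<exists>D'\<subseteq>D. minimal_dominating V E D'"
proof -
  let ?P = "\<lambda>n. \<exists>X. X \<subseteq> D \<and> dominating V E X \<and> card X = n"
  have ex: "?P (card D)" using assms by blast
  define n where "n = (LEAST n. ?P n)"
  have "?P n" unfolding n_def by (rule LeastI_ex) (use ex in blast)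
  then obtain X where X: "X \<subseteq> D" "dominating V E X" "card X = n" by blast
  have fD: "finite D" using assms unfolding dominating_def by (blast intro: finite_subset)
  have "minimal_dominating V E X"
    unfolding minimal_dominating_def
  proof (intro conjI allI impI X(2))
    fix D' assume "D' \<subset> X"
    show "\<not> dominating V E D'"
    proof
      assume "dominating V E D'"
      then have "?P (card D')" using \<open>D' \<subset> X\<close> X(1) by blast
      then have "n \<le> card D'" unfolding n_def by (rule Least_le)
      moreover have "card D' < card X" using \<open>D' \<subset> X\<close> X(1) fD
        by (meson finite_subset psubset_card_mono)
      ultimately show False using X(3) by simp
    qed
  qed
  with X show ?thesis by blast
qed

lemma wd_le:
  "well_dominated V E \<Longrightarrow> minimal_dominating V E D1 \<Longrightarrow> dominating V E D \<Longrightarrow> card D1 \<le> card D"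
  unfolding well_dominated_def minimum_dominating_def by blast

lemma wd_eq:
  assumes "well_dominated V E" "minimal_dominating V E D1" "minimal_dominating V E D2"
  shows "card D1 = card D2"
proof -
  have "dominating V E D1" "dominating V E D2" using assms(2,3) unfolding minimal_dominating_def by blast+
  then show ?thesis using wd_le[OF assms(1) assms(2)] wd_le[OF assms(1) assms(3)] by (simp add: le_antisym)
qed

lemma wd_intro:
  assumes "finite V" "\<And>D. minimal_dominating V E D \<Longrightarrow> card D = c"
  shows "well_dominated V E"
  unfolding well_dominated_def minimum_dominating_def
proof (intro allI impI conjI)
  fix D D' assume D: "minimal_dominating V E D"
  then show "dominating V E D" unfolding minimal_dominating_def by blast
  {
    assume d': "dominating V E D'"
    obtain D'' where D'': "D'' \<subseteq> D'" "minimal_dominating V E D''"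
      using exists_minimal_sub[OF assms(1) d'] by blast
    have fin: "finite D'" using d' assms(1) unfolding dominating_def by (meson finite_subset)
    have "card D = c" using assms(2)[OF D] .
    moreover have "card D'' = c" using assms(2)[OF D''(2)] .
    moreover have "card D'' \<le> card D'" using card_mono[OF fin D''(1)] .
    ultimately show "card D \<le> card D'" by simp
  }
qed

lemma indep_dom_minimal:
  assumes "dominating V E D" "\<forall>x\<in>D. \<forall>y\<in>D. (x,y) \<notin> E"
  shows "minimal_dominating V E D"
  unfolding minimal_dominating_iff
proof (intro conjI ballI assms(1))
  fix x assume x: "x \<in> D"
  show "\<not> dominating V E (D - {x})"
  proof
    assume "dominating V E (D - {x})"
    moreover have "x \<in> V" using assms(1) x unfolding dominating_def by blast
    ultimately obtain u where "u \<in> D - {x}" "(u,x) \<in> E" unfolding dominating_def by blast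
    with assms(2) x show False by blast
  qed
qed

lemma graph_iso_sym:
  assumes "graph_iso V1 E1 V2 E2" shows "graph_iso V2 E2 V1 E1"
proof -
  from assms obtain f where f: "bij_betw f V1 V2" "\<forall>u\<in>V1. \<forall>v\<in>V1. (u, v) \<in> E1 \<longleftrightarrow> (f u, f v) \<in> E2"
    unfolding graph_iso_def by blast
  let ?g = "inv_into V1 f"
  have g: "bij_betw ?g V2 V1" using f(1) by (rule bij_betw_inv_into)
  have "\<forall>u\<in>V2. \<forall>v\<in>V2. (u, v) \<in> E2 \<longleftrightarrow> (?g u, ?g v) \<in> E1"
  proof (intro ballI)
    fix u v assume uv: "u \<in> V2" "v \<in> V2"
    have "?g u \<in> V1" "?g v \<in> V1" using g uv by (auto simp: bij_betw_def)
    moreover have "f (?g u) = u" "f (?g v) = v" using f(1) uv by (auto simp: bij_betw_def f_inv_into_f)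
    ultimately show "(u, v) \<in> E2 \<longleftrightarrow> (?g u, ?g v) \<in> E1" using f(2) by metis
  qed
  with g show ?thesis unfolding graph_iso_def by blast
qed

lemma graph_iso_trans:
  assumes "graph_iso V1 E1 V2 E2" "graph_iso V2 E2 V3 E3" shows "graph_iso V1 E1 V3 E3"
proof -
  from assms(1) obtain f where f: "bij_betw f V1 V2" "\<forall>u\<in>V1. \<forall>v\<in>V1. (u, v) \<in> E1 \<longleftrightarrow> (f u, f v) \<in> E2"
    unfolding graph_iso_def by blast
  from assms(2) obtain g where g: "bij_betw g V2 V3" "\<forall>u\<in>V2. \<forall>v\<in>V2. (u, v) \<in> E2 \<longleftrightarrow> (g u, g v) \<in> E3"
    unfolding graph_iso_def by blast
  have "bij_betw (g \<circ> f) V1 V3" using f(1) g(1) by (rule bij_betw_trans)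
  moreover have "\<forall>u\<in>V1. \<forall>v\<in>V1. (u, v) \<in> E1 \<longleftrightarrow> ((g \<circ> f) u, (g \<circ> f) v) \<in> E3"
    using f g by (auto simp: bij_betw_def)
  ultimately show ?thesis unfolding graph_iso_def by blast
qed

lemma prod_iso:
  assumes "graph_iso V1 E1 W1 F1" "graph_iso V2 E2 W2 F2"
  shows "graph_iso (dprod_verts V1 V2) (dprod_edges E1 E2) (dprod_verts W1 W2) (dprod_edges F1 F2)"
proof -
  from assms(1) obtain f where f: "bij_betw f V1 W1" "\<forall>u\<in>V1. \<forall>v\<in>V1. (u, v) \<in> E1 \<longleftrightarrow> (f u, f v) \<in> F1"
    unfolding graph_iso_def by blast
  from assms(2) obtain g where g: "bij_betw g V2 W2" "\<forall>u\<in>V2. \<forall>v\<in>V2. (u, v) \<in> E2 \<longleftrightarrow> (g u, g v) \<in> F2"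
    unfolding graph_iso_def by blast
  have "bij_betw (map_prod f g) (V1 \<times> V2) (W1 \<times> W2)" using f(1) g(1) by (rule bij_betw_map_prod)
  moreover have "\<forall>u\<in>V1 \<times> V2. \<forall>v\<in>V1 \<times> V2. (u, v) \<in> dprod_edges E1 E2 \<longleftrightarrow> (map_prod f g u, map_prod f g v) \<in> dprod_edges F1 F2"
    using f(2) g(2) by auto
  ultimately show ?thesis unfolding graph_iso_def dprod_verts_def by blast
qed

lemma swap_iso:
  "graph_iso (dprod_verts V1 V2) (dprod_edges E1 E2) (dprod_verts V2 V1) (dprod_edges E2 E1)"
proof -
  have "bij_betw prod.swap (V1 \<times> V2) (V2 \<times> V1)"
    by (rule bij_betw_byWitness[where f'=prod.swap]) auto
  moreover have "\<forall>u\<in>V1 \<times> V2. \<forall>v\<in>V1 \<times> V2. (u, v) \<in> dprod_edges E1 E2 \<longleftrightarrow> (prod.swap u, prod.swap v) \<in> dprod_edges E2 E1"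
    by auto
  ultimately show ?thesis unfolding graph_iso_def dprod_verts_def by blast
qed

lemma dominating_iso:
  assumes f: "bij_betw f V1 V2" "\<forall>u\<in>V1. \<forall>v\<in>V1. (u, v) \<in> E1 \<longleftrightarrow> (f u, f v) \<in> E2"
    and E1: "E1 \<subseteq> V1 \<times> V1" and E2: "E2 \<subseteq> V2 \<times> V2" and D: "D \<subseteq> V1"
  shows "dominating V1 E1 D \<longleftrightarrow> dominating V2 E2 (f ` D)"
proof
  assume d: "dominating V1 E1 D"
  show "dominating V2 E2 (f ` D)" unfolding dominating_def
  proof (intro conjI ballI)
    show "f ` D \<subseteq> V2" using D f(1) by (auto simp: bij_betw_def)
    fix w assume "w \<in> V2"
    then obtain v where v: "v \<in> V1" "w = f v" using f(1) by (auto simp: bij_betw_def)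
    then have "v \<in> D \<or> (\<exists>u\<in>D. (u, v) \<in> E1)" using d unfolding dominating_def by blast
    then show "w \<in> f ` D \<or> (\<exists>u\<in>f ` D. (u, w) \<in> E2)" using v f(2) D by blast
  qed
next
  assume d: "dominating V2 E2 (f ` D)"
  show "dominating V1 E1 D" unfolding dominating_def
  proof (intro conjI ballI D)
    fix v assume v: "v \<in> V1"
    then have "f v \<in> V2" using f(1) by (auto simp: bij_betw_def)
    then have "f v \<in> f ` D \<or> (\<exists>u\<in>f ` D. (u, f v) \<in> E2)" using d unfolding dominating_def by blast
    moreover have "f v \<in> f ` D \<Longrightarrow> v \<in> D" using f(1) D v by (auto simp: bij_betw_def inj_on_def)
    ultimately show "v \<in> D \<or> (\<exists>u\<in>D. (u, v) \<in> E1)" using f(2) D v by blast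
  qed
qed

lemma wd_iso:
  assumes iso: "graph_iso V1 E1 V2 E2" and E1: "E1 \<subseteq> V1 \<times> V1" and E2: "E2 \<subseteq> V2 \<times> V2"
    and fin: "finite V1" and wd: "well_dominated V2 E2"
  shows "well_dominated V1 E1"
proof -
  from iso obtain f where f: "bij_betw f V1 V2" "\<forall>u\<in>V1. \<forall>v\<in>V1. (u, v) \<in> E1 \<longleftrightarrow> (f u, f v) \<in> E2"
    unfolding graph_iso_def by blast
  have inj: "inj_on f V1" using f(1) by (simp add: bij_betw_def)
  have dom: "dominating V1 E1 D \<longleftrightarrow> dominating V2 E2 (f ` D)" if "D \<subseteq> V1" for D
    using dominating_iso[OF f E1 E2 that] .
  show ?thesis unfolding well_dominated_def minimum_dominating_def
  proof (intro allI impI conjI)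
    fix D D' assume D: "minimal_dominating V1 E1 D"
    then have DV: "D \<subseteq> V1" and dD: "dominating V1 E1 D"
      unfolding minimal_dominating_def dominating_def by blast+
    show "dominating V1 E1 D" by fact
    have "minimal_dominating V2 E2 (f ` D)" unfolding minimal_dominating_iff
    proof (intro conjI ballI)
      show "dominating V2 E2 (f ` D)" using dom[OF DV] dD by blast
      fix y assume "y \<in> f ` D"
      then obtain x where x: "x \<in> D" "y = f x" by blast
      have "f ` D - {y} = f ` (D - {x})" using x inj DV by (auto simp: inj_on_def)
      moreover have "\<not> dominating V1 E1 (D - {x})" using D x unfolding minimal_dominating_iff by blast
      ultimately show "\<not> dominating V2 E2 (f ` D - {y})" using dom[of "D - {x}"] DV by auto
    qed
    {
      assume d': "dominating V1 E1 D'"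
      then have D'V: "D' \<subseteq> V1" unfolding dominating_def by blast
      have "card (f ` D) \<le> card (f ` D')"
        using wd_le[OF wd \<open>minimal_dominating V2 E2 (f ` D)\<close>] dom[OF D'V] d' by blast
      moreover have "card (f ` D) = card D" "card (f ` D') = card D'"
        using inj DV D'V by (auto intro: card_image inj_on_subset)
      ultimately show "card D \<le> card D'" by simp
    }
  qed
qed

definition domL :: "'a list \<Rightarrow> ('a \<Rightarrow> 'a \<Rightarrow> bool) \<Rightarrow> 'a list \<Rightarrow> bool" where
  "domL vs adj D = list_all (\<lambda>v. v \<in> set D \<or> list_ex (\<lambda>u. adj u v) D) vs"

definition chkL :: "'a list \<Rightarrow> ('a \<Rightarrow> 'a \<Rightarrow> bool) \<Rightarrow> nat \<Rightarrow> bool" where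
  "chkL vs adj c = list_all (\<lambda>D. domL vs adj D \<and> list_all (\<lambda>x. \<not> domL vs adj (removeAll x D)) D
      \<longrightarrow> length D = c) (subseqs vs)"

lemma domL_iff:
  assumes "\<forall>u\<in>set vs. \<forall>v\<in>set vs. (u,v)\<in>E \<longleftrightarrow> adj u v" "set D \<subseteq> set vs"
  shows "domL vs adj D \<longleftrightarrow> dominating (set vs) E (set D)"
  using assms unfolding domL_def dominating_def list_all_iff list_ex_iff by blast

lemma chkL_wd:
  assumes dist: "distinct vs" and adj: "\<forall>u\<in>set vs. \<forall>v\<in>set vs. (u,v)\<in>E \<longleftrightarrow> adj u v"
    and c: "chkL vs adj c"
  shows "well_dominated (set vs) E"
proof (rule wd_intro)
  show "finite (set vs)" by simp
  fix D assume D: "minimal_dominating (set vs) E D"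
  then have "D \<subseteq> set vs" unfolding minimal_dominating_def dominating_def by blast
  then obtain ds where ds: "ds \<in> set (subseqs vs)" "set ds = D" using subset_subseqs by blast
  have dds: "distinct ds" using subseqs_distinctD[OF ds(1) dist] .
  have sub: "set ds \<subseteq> set vs" using ds \<open>D \<subseteq> set vs\<close> by simp
  have "domL vs adj ds" using domL_iff[OF adj sub] D ds(2) unfolding minimal_dominating_def by blast
  moreover have "list_all (\<lambda>x. \<not> domL vs adj (removeAll x ds)) ds"
    unfolding list_all_iff
  proof
    fix x assume x: "x \<in> set ds"
    have "set (removeAll x ds) \<subseteq> set vs" using sub by auto
    then have "domL vs adj (removeAll x ds) \<longleftrightarrow> dominating (set vs) E (D - {x})"
      using domL_iff[OF adj] ds(2) by simp
    then show "\<not> domL vs adj (removeAll x ds)" using D x ds(2) unfolding minimal_dominating_iff by blast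
  qed
  ultimately have "length ds = c" using c ds(1) unfolding chkL_def list_all_iff by blast
  then show "card D = c" using distinct_card[OF dds] ds(2) by simp
qed

lemma K3K3_chk: "chkL (List.product [0::nat,1,2] [0::nat,1,2]) (\<lambda>(a,b) (c,d). a \<noteq> c \<and> b \<noteq> d) 3"
  by code_simp

lemma K2C4_chk: "chkL (List.product [0::nat,1] [0::nat,1,2,3])
   (\<lambda>(a,b) (c,d). a \<noteq> c \<and> (d = (b+1) mod 4 \<or> b = (d+1) mod 4)) 4"
  by code_simp

lemma K3K3_wd: "well_dominated (dprod_verts (K_verts 3) (K_verts 3)) (dprod_edges (K_edges 3) (K_edges 3))"
proof -
  have e: "set (List.product [0::nat,1,2] [0::nat,1,2]) = dprod_verts (K_verts 3) (K_verts 3)"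
    by (auto simp: dprod_verts_def K_verts_def)
  have "\<forall>u\<in>set (List.product [0::nat,1,2] [0::nat,1,2]). \<forall>v\<in>set (List.product [0::nat,1,2] [0::nat,1,2]).
      (u,v) \<in> dprod_edges (K_edges 3) (K_edges 3) \<longleftrightarrow> (\<lambda>(a,b) (c,d). a \<noteq> c \<and> b \<noteq> d) u v"
    by (auto simp: K_edges_def)
  from chkL_wd[OF _ this K3K3_chk] e show ?thesis by simp
qed

lemma K2C4_wd: "well_dominated (dprod_verts (K_verts 2) (C_verts 4)) (dprod_edges (K_edges 2) (C_edges 4))"
proof -
  have e: "set (List.product [0::nat,1] [0::nat,1,2,3]) = dprod_verts (K_verts 2) (C_verts 4)"
    by (auto simp: dprod_verts_def K_verts_def C_verts_def)
  have "\<forall>u\<in>set (List.product [0::nat,1] [0::nat,1,2,3]). \<forall>v\<in>set (List.product [0::nat,1] [0::nat,1,2,3]).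
      (u,v) \<in> dprod_edges (K_edges 2) (C_edges 4) \<longleftrightarrow>
      (\<lambda>(a,b) (c,d). a \<noteq> c \<and> (d = (b+1) mod 4 \<or> b = (d+1) mod 4)) u v"
    by (auto simp: K_edges_def C_edges_def)
  from chkL_wd[OF _ this K2C4_chk] e show ?thesis by simp
qed

lemma pendant_card:
  assumes symE: "sym E" and irr: "irrefl E"
    and pi: "\<And>v. v \<in> V \<Longrightarrow> \<pi> v \<in> V \<and> \<pi> (\<pi> v) = v \<and> (v, \<pi> v) \<in> E"
    and leaf: "\<And>v. v \<in> V \<Longrightarrow> (\<forall>x. (x, v) \<in> E \<longrightarrow> x = \<pi> v) \<or> (\<forall>x. (x, \<pi> v) \<in> E \<longrightarrow> x = v)"
    and R: "R \<subseteq> V" "\<And>v. v \<in> V \<Longrightarrow> v \<in> R \<longleftrightarrow> \<pi> v \<notin> R"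
    and D: "minimal_dominating V E D"
  shows "card D = card R"
proof -
  have dD: "dominating V E D" and DV: "D \<subseteq> V" using D unfolding minimal_dominating_def dominating_def by blast+
  have Dmin: "\<And>x. x \<in> D \<Longrightarrow> \<not> dominating V E (D - {x})" using D unfolding minimal_dominating_iff by blast
  have one: "v \<in> D \<or> \<pi> v \<in> D" if v: "v \<in> V" for v
  proof -
    have pv: "\<pi> v \<in> V" "\<pi> (\<pi> v) = v" using pi[OF v] by auto
    from leaf[OF v] show ?thesis
    proof
      assume l: "\<forall>x. (x, v) \<in> E \<longrightarrow> x = \<pi> v"
      from dD v have "v \<in> D \<or> (\<exists>u\<in>D. (u, v) \<in> E)" unfolding dominating_def by blast
      with l show ?thesis by blast
    next
      assume l: "\<forall>x. (x, \<pi> v) \<in> E \<longrightarrow> x = v"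
      from dD pv have "\<pi> v \<in> D \<or> (\<exists>u\<in>D. (u, \<pi> v) \<in> E)" unfolding dominating_def by blast
      with l show ?thesis by blast
    qed
  qed
  have rem: False if l: "\<forall>x. (x, w) \<in> E \<longrightarrow> x = m" and wD: "w \<in> D" and mD: "m \<in> D" and wm: "w \<noteq> m"
     and mw: "(m, w) \<in> E" for w m
  proof -
    have "dominating V E (D - {w})" unfolding dominating_def
    proof (intro conjI ballI)
      show "D - {w} \<subseteq> V" using DV by blast
      fix z assume z: "z \<in> V"
      show "z \<in> D - {w} \<or> (\<exists>u\<in>D - {w}. (u, z) \<in> E)"
      proof (cases "z = w")
        case True then show ?thesis using mD wm mw by blast
      next
        case False
        from dD z have "z \<in> D \<or> (\<exists>u\<in>D. (u, z) \<in> E)" unfolding dominating_def by blast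
        then show ?thesis
        proof
          assume "z \<in> D" then show ?thesis using False by blast
        next
          assume "\<exists>u\<in>D. (u, z) \<in> E"
          then obtain u where u: "u \<in> D" "(u, z) \<in> E" by blast
          show ?thesis
          proof (cases "u = w")
            case True
            then have "(z, w) \<in> E" using u symE by (auto dest: symD)
            then have "z = m" using l by blast
            then show ?thesis using mD wm by blast
          next
            case False then show ?thesis using u by blast
          qed
        qed
      qed
    qed
    then show False using Dmin wD by blast
  qed
  have notboth: "\<not> (v \<in> D \<and> \<pi> v \<in> D)" if v: "v \<in> V" for v
  proof
    assume both: "v \<in> D \<and> \<pi> v \<in> D"
    have pv: "\<pi> v \<in> V" "\<pi> (\<pi> v) = v" "(v, \<pi> v) \<in> E" using pi[OF v] by auto
    have ne: "v \<noteq> \<pi> v" using pv(3) irr by (auto simp: irrefl_def)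
    have pv': "(\<pi> v, v) \<in> E" using pv(3) symE by (auto dest: symD)
    from leaf[OF v] show False
    proof
      assume l: "\<forall>x. (x, v) \<in> E \<longrightarrow> x = \<pi> v"
      show False using rem[OF l _ _ ne pv'] both by blast
    next
      assume l: "\<forall>x. (x, \<pi> v) \<in> E \<longrightarrow> x = v"
      show False using rem[OF l _ _ _ pv(3)] both ne by auto
    qed
  qed
  define f where "f d = (if d \<in> R then d else \<pi> d)" for d
  have "bij_betw f D R" unfolding bij_betw_def
  proof
    show "inj_on f D"
    proof (rule inj_onI)
      fix d1 d2 assume d: "d1 \<in> D" "d2 \<in> D" "f d1 = f d2"
      have V: "d1 \<in> V" "d2 \<in> V" using d DV by auto
      show "d1 = d2"
      proof (cases "d1 \<in> R"; cases "d2 \<in> R")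
        assume "d1 \<in> R" "d2 \<in> R" then show ?thesis using d by (simp add: f_def)
      next
        assume a: "d1 \<in> R" "d2 \<notin> R"
        then have "d1 = \<pi> d2" using d by (simp add: f_def)
        then show ?thesis using notboth[OF V(2)] d by blast
      next
        assume a: "d1 \<notin> R" "d2 \<in> R"
        then have "d2 = \<pi> d1" using d by (simp add: f_def)
        then show ?thesis using notboth[OF V(1)] d by blast
      next
        assume a: "d1 \<notin> R" "d2 \<notin> R"
        then have "\<pi> d1 = \<pi> d2" using d by (simp add: f_def)
        then have "\<pi> (\<pi> d1) = \<pi> (\<pi> d2)" by simp
        then show ?thesis using pi[OF V(1)] pi[OF V(2)] by simp
      qed
    qed
    show "f ` D = R"
    proof
      show "f ` D \<subseteq> R"
      proof
        fix y assume "y \<in> f ` D"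
        then obtain d where d: "d \<in> D" "y = f d" by blast
        then have "d \<in> V" using DV by blast
        then show "y \<in> R" using d R(2)[of d] by (auto simp: f_def)
      qed
      show "R \<subseteq> f ` D"
      proof
        fix r assume r: "r \<in> R"
        then have rV: "r \<in> V" using R(1) by blast
        have pr: "\<pi> r \<in> V" "\<pi> (\<pi> r) = r" using pi[OF rV] by auto
        have "\<pi> r \<notin> R" using R(2)[OF rV] r by blast
        from one[OF rV] show "r \<in> f ` D"
        proof
          assume "r \<in> D" then show ?thesis using r by (force simp: f_def)
        next
          assume "\<pi> r \<in> D"
          moreover have "f (\<pi> r) = r" using \<open>\<pi> r \<notin> R\<close> pr by (simp add: f_def)
          ultimately show ?thesis by (metis imageI)
        qed
      qed
    qed
  qed
  then show ?thesis by (rule bij_betw_same_card)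
qed

lemma corona_edges_iff[simp]:
  "((u,b),(v,c)) \<in> corona_edges V E \<longleftrightarrow>
     (\<not> b \<and> \<not> c \<and> (u,v) \<in> E) \<or> (\<not> b \<and> c \<and> u = v \<and> u \<in> V) \<or> (b \<and> \<not> c \<and> u = v \<and> u \<in> V)"
  unfolding corona_edges_def by auto

lemma K2_corona_wd:
  assumes "simple_graph VF EF"
  shows "well_dominated (dprod_verts (K_verts 2) (corona_verts VF)) (dprod_edges (K_edges 2) (corona_edges VF EF))"
proof -
  let ?V = "dprod_verts (K_verts 2) (corona_verts VF)"
  let ?E = "dprod_edges (K_edges 2) (corona_edges VF EF)"
  have fin: "finite VF" and EF: "EF \<subseteq> VF \<times> VF" "sym EF" "irrefl EF"
    using assms unfolding simple_graph_def by auto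
  define \<pi> where "\<pi> x = (case x of (i, (u, b)) \<Rightarrow> (1 - i, (u, \<not> b)))" for x :: "nat \<times> 'a \<times> bool"
  define R where "R = {(i, (u, b)). i < (2::nat) \<and> u \<in> VF \<and> b}"
  have symE: "sym ?E"
  proof (rule symI)
    fix x y assume "(x, y) \<in> ?E"
    then show "(y, x) \<in> ?E" using EF(2)
      by (cases x; cases y) (auto simp: K_edges_def dprod_edges_def dest: symD)
  qed
  have irrE: "irrefl ?E" by (auto simp: irrefl_def K_edges_def dprod_edges_def)
  have V: "?V = {(i, (u, b)). i < 2 \<and> u \<in> VF}"
    by (auto simp: dprod_verts_def K_verts_def corona_verts_def)
  have finV: "finite ?V" using fin by (simp add: dprod_verts_def K_verts_def corona_verts_def)
  show ?thesis
  proof (rule wd_intro[OF finV])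
    fix D assume D: "minimal_dominating ?V ?E D"
    show "card D = card R"
    proof (rule pendant_card[where \<pi>=\<pi> and R=R, OF symE irrE _ _ _ _ D])
      fix v assume "v \<in> ?V"
      then obtain i u b where v: "v = (i, (u, b))" "i < 2" "u \<in> VF" using V by blast
      show "\<pi> v \<in> ?V \<and> \<pi> (\<pi> v) = v \<and> (v, \<pi> v) \<in> ?E"
        using v by (auto simp: \<pi>_def V K_edges_def) presburger+
    next
      fix v assume "v \<in> ?V"
      then obtain i u b where v: "v = (i, (u, b))" "i < 2" "u \<in> VF" using V by blast
      show "(\<forall>x. (x, v) \<in> ?E \<longrightarrow> x = \<pi> v) \<or> (\<forall>x. (x, \<pi> v) \<in> ?E \<longrightarrow> x = v)"
      proof (cases b)
        case True
        have "x = \<pi> v" if "(x, v) \<in> ?E" for x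
          using that v True by (cases x) (auto simp: \<pi>_def K_edges_def)
        then show ?thesis by blast
      next
        case False
        have "x = v" if "(x, \<pi> v) \<in> ?E" for x
          using that v False by (cases x) (auto simp: \<pi>_def K_edges_def)
        then show ?thesis by blast
      qed
    next
      show "R \<subseteq> ?V" using V by (auto simp: R_def)
    next
      fix v assume "v \<in> ?V"
      then obtain i u b where v: "v = (i, (u, b))" "i < 2" "u \<in> VF" using V by blast
      show "v \<in> R \<longleftrightarrow> \<pi> v \<notin> R" using v by (auto simp: \<pi>_def R_def)
    qed
  qed
qed

definition indep :: "('a \<times> 'a) set \<Rightarrow> 'a set \<Rightarrow> bool" where
  "indep E S \<longleftrightarrow> (\<forall>x\<in>S. \<forall>y\<in>S. (x,y) \<notin> E)"

definition maxind :: "'a set \<Rightarrow> ('a \<times> 'a) set \<Rightarrow> 'a set \<Rightarrow> bool" where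
  "maxind V E S \<longleftrightarrow> indep E S \<and> dominating V E S"

lemma maxind_minimal: "maxind V E S \<Longrightarrow> minimal_dominating V E S"
  unfolding maxind_def indep_def by (blast intro: indep_dom_minimal)

lemma maxind_exists:
  assumes "simple_graph V E" "S \<subseteq> V" "indep E S"
  shows "\<exists>T. S \<subseteq> T \<and> maxind V E T"
proof -
  have fin: "finite V" and symE: "sym E" and irr: "irrefl E" using assms(1) unfolding simple_graph_def by auto
  let ?F = "{T. S \<subseteq> T \<and> T \<subseteq> V \<and> indep E T}"
  have "?F \<subseteq> Pow V" by blast
  then have "finite ?F" using fin by (simp add: finite_subset)
  moreover have "?F \<noteq> {}" using assms by blast
  ultimately obtain T where T: "T \<in> ?F" and mx: "\<forall>T'\<in>?F. T \<le> T' \<longrightarrow> T = T'"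
    using finite_has_maximal[of ?F] by meson
  have "dominating V E T" unfolding dominating_def
  proof (intro conjI ballI)
    show "T \<subseteq> V" using T by blast
    fix v assume v: "v \<in> V"
    show "v \<in> T \<or> (\<exists>u\<in>T. (u, v) \<in> E)"
    proof (rule ccontr)
      assume n: "\<not> (v \<in> T \<or> (\<exists>u\<in>T. (u, v) \<in> E))"
      have "indep E (insert v T)" unfolding indep_def
      proof (intro ballI)
        fix x y assume xy: "x \<in> insert v T" "y \<in> insert v T"
        have "(v,v) \<notin> E" using irr by (simp add: irrefl_def)
        moreover have "(x,v) \<notin> E" if "x \<in> T" for x using n that by blast
        moreover have "(v,x) \<notin> E" if "x \<in> T" for x using n that symE by (blast dest: symD)
        moreover have "(x,y) \<notin> E" if "x \<in> T" "y \<in> T" using T that unfolding indep_def by blast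
        ultimately show "(x,y) \<notin> E" using xy by (cases "x = v"; cases "y = v") auto
      qed
      then have "insert v T \<in> ?F" using T v by auto
      moreover have "T \<le> insert v T" by (rule subset_insertI)
      ultimately have "T = insert v T" using mx by simp
      with n show False by (metis insertI1)
    qed
  qed
  with T show ?thesis unfolding maxind_def by blast
qed

lemma maxind_exists0:
  assumes "simple_graph V E" shows "\<exists>T. maxind V E T"
  using maxind_exists[OF assms, of "{}"] by (auto simp: indep_def)

lemma maxind_nonempty: "maxind V E T \<Longrightarrow> V \<noteq> {} \<Longrightarrow> T \<noteq> {}"
  unfolding maxind_def dominating_def by blast

lemma has_nbr:
  assumes "simple_graph V E" "connected_graph V E" "card V \<ge> 2" "v \<in> V"
  shows "\<exists>u. (v,u) \<in> E"
proof -
  have fin: "finite V" using assms(1) unfolding simple_graph_def by blast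
  have "\<exists>w\<in>V. w \<noteq> v"
  proof (rule ccontr)
    assume "\<not> (\<exists>w\<in>V. w \<noteq> v)"
    then have "V \<subseteq> {v}" by blast
    then have "card V \<le> card {v}" by (intro card_mono) auto
    then have "card V \<le> 1" by simp
    with assms(3) show False by simp
  qed
  then obtain w where w: "w \<in> V" "w \<noteq> v" by blast
  have "(v,w) \<in> E\<^sup>*" using assms(2,4) w unfolding connected_graph_def by blast
  then show ?thesis using w(2) by (cases rule: converse_rtranclE) auto
qed

lemma closed_all:
  assumes "connected_graph V E" "s \<in> S" "s \<in> V" "\<And>x y. x \<in> S \<Longrightarrow> (x,y) \<in> E \<Longrightarrow> y \<in> S"
  shows "V \<subseteq> S"
proof
  fix w assume "w \<in> V"
  then have "(s,w) \<in> E\<^sup>*" using assms(1,3) unfolding connected_graph_def by blast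
  then show "w \<in> S" by (induction rule: rtrancl_induct) (use assms in blast)+
qed

lemma three_elems:
  assumes "card V \<ge> 3"
  obtains a b c where "a \<in> V" "b \<in> V" "c \<in> V" "a \<noteq> b" "a \<noteq> c" "b \<noteq> c"
proof -
  from assms have "Suc (Suc (Suc 0)) \<le> card V" by simp
  then show ?thesis using that by (auto simp: card_le_Suc_iff)
qed

lemma path3:
  assumes "simple_graph V E" "connected_graph V E" "card V \<ge> 3"
  shows "\<exists>y z h. (y,z) \<in> E \<and> (z,h) \<in> E \<and> h \<noteq> y"
proof (rule ccontr)
  assume n: "\<not> ?thesis"
  have fin: "finite V" and symE: "sym E" and EV: "E \<subseteq> V \<times> V" using assms(1) unfolding simple_graph_def by auto
  have c2: "card V \<ge> 2" using assms(3) by simp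
  obtain v where v: "v \<in> V" using three_elems[OF assms(3)] by blast
  obtain z where z: "(v,z) \<in> E" using has_nbr[OF assms(1,2) c2 v] by blast
  have zv: "(z,v) \<in> E" using z symE by (blast dest: symD)
  have Nz: "\<And>h. (z,h) \<in> E \<Longrightarrow> h = v" using n z by blast
  have Nv: "\<And>h. (v,h) \<in> E \<Longrightarrow> h = z" using n zv by blast
  have "V \<subseteq> {v,z}" using closed_all[OF assms(2), of v "{v,z}"] v Nz Nv by blast
  then have "card V \<le> card {v,z}" by (intro card_mono) auto
  also have "card {v,z} \<le> 2" by (cases "v = z") auto
  finally have "card V \<le> 2" .
  with assms(3) show False by simp
qed

lemma complete_iso:
  assumes "simple_graph V E" "\<forall>u\<in>V. \<forall>w\<in>V. u \<noteq> w \<longrightarrow> (u,w) \<in> E" "card V = n"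
  shows "graph_iso V E (K_verts n) (K_edges n)"
proof -
  have fin: "finite V" and irr: "irrefl E" using assms(1) unfolding simple_graph_def by auto
  obtain f where f: "bij_betw f V {0..<card V}" using ex_bij_betw_finite_nat[OF fin] by blast
  have "\<forall>u\<in>V. \<forall>v\<in>V. (u, v) \<in> E \<longleftrightarrow> (f u, f v) \<in> K_edges n"
  proof (intro ballI)
    fix u v assume uv: "u \<in> V" "v \<in> V"
    have "f u < n" "f v < n" using f uv assms(3) by (auto simp: bij_betw_def)
    moreover have "f u = f v \<longleftrightarrow> u = v" using f uv by (auto simp: bij_betw_def inj_on_def)
    moreover have "(u,v) \<in> E \<longleftrightarrow> u \<noteq> v" using assms(2) uv irr by (auto simp: irrefl_def)
    ultimately show "(u, v) \<in> E \<longleftrightarrow> (f u, f v) \<in> K_edges n" by (auto simp: K_edges_def)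
  qed
  with f assms(3) show ?thesis unfolding graph_iso_def K_verts_def by blast
qed

lemma dprod_edges_sub:
  "E1 \<subseteq> V1 \<times> V1 \<Longrightarrow> E2 \<subseteq> V2 \<times> V2 \<Longrightarrow> dprod_edges E1 E2 \<subseteq> dprod_verts V1 V2 \<times> dprod_verts V1 V2"
  unfolding dprod_edges_def dprod_verts_def by auto

locale twog =
  fixes VG :: "'a set" and EG :: "('a \<times> 'a) set" and VH :: "'b set" and EH :: "('b \<times> 'b) set"
  assumes sG: "simple_graph VG EG" and sH: "simple_graph VH EH"
    and nG: "\<And>v. v \<in> VG \<Longrightarrow> \<exists>u. (v,u) \<in> EG" and nH: "\<And>v. v \<in> VH \<Longrightarrow> \<exists>u. (v,u) \<in> EH"
begin

lemma finG: "finite VG" and EGV: "EG \<subseteq> VG \<times> VG" and symG: "sym EG" and irrG: "irrefl EG"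
  using sG unfolding simple_graph_def by auto
lemma finH: "finite VH" and EHV: "EH \<subseteq> VH \<times> VH" and symH: "sym EH" and irrH: "irrefl EH"
  using sH unfolding simple_graph_def by auto

lemma symG': "(u,v) \<in> EG \<Longrightarrow> (v,u) \<in> EG" using symG by (blast dest: symD)
lemma symH': "(u,v) \<in> EH \<Longrightarrow> (v,u) \<in> EH" using symH by (blast dest: symD)
lemma irrG': "(u,u) \<notin> EG" using irrG by (simp add: irrefl_def)
lemma irrH': "(u,u) \<notin> EH" using irrH by (simp add: irrefl_def)
lemma inG: "(u,v) \<in> EG \<Longrightarrow> u \<in> VG \<and> v \<in> VG" using EGV by blast
lemma inH: "(u,v) \<in> EH \<Longrightarrow> u \<in> VH \<and> v \<in> VH" using EHV by blast

lemma nH': "w \<in> VH \<Longrightarrow> \<exists>w'. w' \<in> VH \<and> (w',w) \<in> EH"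
  using nH[of w] symH' inH by blast
lemma nG': "w \<in> VG \<Longrightarrow> \<exists>w'. w' \<in> VG \<and> (w',w) \<in> EG"
  using nG[of w] symG' inG by blast

abbreviation "XV \<equiv> dprod_verts VG VH"
abbreviation "XE \<equiv> dprod_edges EG EH"

lemma finX: "finite XV" using finG finH by (simp add: dprod_verts_def)

lemma col_min:
  assumes A: "maxind VG EG A" shows "minimal_dominating XV XE (A \<times> VH)"
proof (rule maxind_minimal)
  have iA: "indep EG A" and dA: "dominating VG EG A" using A unfolding maxind_def by auto
  show "maxind XV XE (A \<times> VH)" unfolding maxind_def
  proof
    show "indep XE (A \<times> VH)" using iA unfolding indep_def by auto
    show "dominating XV XE (A \<times> VH)" unfolding dominating_def dprod_verts_def
    proof (intro conjI ballI)
      show "A \<times> VH \<subseteq> VG \<times> VH" using dA unfolding dominating_def by blast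
      fix p assume "p \<in> VG \<times> VH"
      then obtain g w where p: "p = (g,w)" "g \<in> VG" "w \<in> VH" by blast
      show "p \<in> A \<times> VH \<or> (\<exists>u\<in>A \<times> VH. (u, p) \<in> XE)"
      proof (cases "g \<in> A")
        case True then show ?thesis using p by blast
      next
        case False
        then obtain a where a: "a \<in> A" "(a,g) \<in> EG" using dA p unfolding dominating_def by blast
        obtain w' where "w' \<in> VH" "(w',w) \<in> EH" using nH' p by blast
        then show ?thesis using a p by auto
      qed
    qed
  qed
qed

lemma row_min:
  assumes B: "maxind VH EH B" shows "minimal_dominating XV XE (VG \<times> B)"
proof (rule maxind_minimal)
  have iB: "indep EH B" and dB: "dominating VH EH B" using B unfolding maxind_def by auto
  show "maxind XV XE (VG \<times> B)" unfolding maxind_def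
  proof
    show "indep XE (VG \<times> B)" using iB unfolding indep_def by auto
    show "dominating XV XE (VG \<times> B)" unfolding dominating_def dprod_verts_def
    proof (intro conjI ballI)
      show "VG \<times> B \<subseteq> VG \<times> VH" using dB unfolding dominating_def by blast
      fix p assume "p \<in> VG \<times> VH"
      then obtain g w where p: "p = (g,w)" "g \<in> VG" "w \<in> VH" by blast
      show "p \<in> VG \<times> B \<or> (\<exists>u\<in>VG \<times> B. (u, p) \<in> XE)"
      proof (cases "w \<in> B")
        case True then show ?thesis using p by blast
      next
        case False
        then obtain b where b: "b \<in> B" "(b,w) \<in> EH" using dB p unfolding dominating_def by blast
        obtain g' where "g' \<in> VG" "(g',g) \<in> EG" using nG' p by blast
        then show ?thesis using b p by auto
      qed
    qed
  qed
qed

definition Pa :: "'a set \<Rightarrow> 'a \<Rightarrow> 'a set" where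
  "Pa A a = {p \<in> VG - A. (a,p) \<in> EG \<and> (\<forall>a'\<in>A. (a',p) \<in> EG \<longrightarrow> a' = a)}"

lemma W1:
  assumes wd: "well_dominated XV XE" and yz: "(y,z) \<in> EH" and zh: "(z,h) \<in> EH" and hy: "h \<noteq> y"
    and A: "maxind VG EG A" and a: "a \<in> A"
  shows "Pa A a \<noteq> {}"
proof
  assume P0: "Pa A a = {}"
  have iA: "indep EG A" and dA: "dominating VG EG A" using A unfolding maxind_def by auto
  have AV: "A \<subseteq> VG" using dA unfolding dominating_def by blast
  have other: "\<exists>a''\<in>A. a'' \<noteq> a \<and> (a'',x) \<in> EG" if x: "x \<in> VG" "x \<notin> A" for x
  proof -
    obtain a' where a': "a' \<in> A" "(a',x) \<in> EG" using dA x unfolding dominating_def by blast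
    show ?thesis
    proof (cases "a' = a")
      case False then show ?thesis using a' by blast
    next
      case True
      have "x \<notin> Pa A a" using P0 by blast
      then show ?thesis using x a' True unfolding Pa_def by blast
    qed
  qed
  obtain g where ag: "(a,g) \<in> EG" using nG a AV by blast
  have gV: "g \<in> VG" using inG[OF ag] by blast
  have gA: "g \<notin> A" using iA a ag unfolding indep_def by blast
  have yV: "y \<in> VH" and zV: "z \<in> VH" and hV: "h \<in> VH" using inH yz inH zh by auto
  define D' where "D' = (A \<times> VH - {(a,y),(a,h)}) \<union> {(g,z)}"
  have dom: "dominating XV XE D'" unfolding dominating_def dprod_verts_def
  proof (intro conjI ballI)
    show "D' \<subseteq> VG \<times> VH" unfolding D'_def using AV gV zV by blast
    fix p assume "p \<in> VG \<times> VH"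
    then obtain x w where p: "p = (x,w)" "x \<in> VG" "w \<in> VH" by blast
    show "p \<in> D' \<or> (\<exists>u\<in>D'. (u, p) \<in> XE)"
    proof (cases "x \<in> A")
      case True
      show ?thesis
      proof (cases "x = a \<and> (w = y \<or> w = h)")
        case True
        then have "((g,z),p) \<in> XE" using p ag yz zh symG' symH' by auto
        then show ?thesis unfolding D'_def by blast
      next
        case False
        then show ?thesis using \<open>x \<in> A\<close> p unfolding D'_def by auto
      qed
    next
      case False
      then obtain a'' where a'': "a'' \<in> A" "a'' \<noteq> a" "(a'',x) \<in> EG" using other p by blast
      obtain w' where w': "w' \<in> VH" "(w',w) \<in> EH" using nH' p by blast
      have "(a'',w') \<in> D'" unfolding D'_def using a'' w' by blast
      moreover have "((a'',w'),p) \<in> XE" using a'' w' p by simp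
      ultimately show ?thesis by blast
    qed
  qed
  have fin: "finite (A \<times> VH)" using AV finG finH by (meson finite_SigmaI finite_subset)
  have sub2: "{(a,y),(a,h)} \<subseteq> A \<times> VH" using a yV hV by blast
  have c2: "card {(a,y),(a,h)} = 2" using hy by simp
  have "card (A \<times> VH - {(a,y),(a,h)}) = card (A \<times> VH) - 2"
    using card_Diff_subset[OF _ sub2] c2 by simp
  moreover have "card D' \<le> card (A \<times> VH - {(a,y),(a,h)}) + 1"
    unfolding D'_def using card_Un_le[of "A \<times> VH - {(a,y),(a,h)}" "{(g,z)}"] by simp
  moreover have "card (A \<times> VH) \<ge> 2" using card_mono[OF fin sub2] c2 by simp
  moreover have "card (A \<times> VH) \<le> card D'" using wd_le[OF wd col_min[OF A] dom] .
  ultimately show False by linarith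
qed

lemma I2:
  assumes wd: "well_dominated XV XE" and A: "maxind VG EG A" and a: "a \<in> A"
    and B: "maxind VH EH B" and Pne: "Pa A a \<noteq> {}"
  shows "card VH = card B * (1 + card (Pa A a))"
proof -
  have iA: "indep EG A" and dA: "dominating VG EG A" using A unfolding maxind_def by auto
  have iB: "indep EH B" and dB: "dominating VH EH B" using B unfolding maxind_def by auto
  have AV: "A \<subseteq> VG" using dA unfolding dominating_def by blast
  have BV: "B \<subseteq> VH" using dB unfolding dominating_def by blast
  have PV: "Pa A a \<subseteq> VG - A" unfolding Pa_def by blast
  obtain p0 where p0: "p0 \<in> Pa A a" using Pne by blast
  define S where "S = (A - {a}) \<times> VH \<union> ({a} \<times> B \<union> Pa A a \<times> B)"
  have memS: "(x,w) \<in> S \<longleftrightarrow> (x \<in> A \<and> x \<noteq> a \<and> w \<in> VH) \<or> (x = a \<and> w \<in> B) \<or> (x \<in> Pa A a \<and> w \<in> B)" for x w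
    unfolding S_def by blast
  have indS: "indep XE S" unfolding indep_def
  proof (intro ballI)
    fix p q assume pq: "p \<in> S" "q \<in> S"
    obtain x1 w1 where p: "p = (x1,w1)" by (cases p)
    obtain x2 w2 where q: "q = (x2,w2)" by (cases q)
    show "(p,q) \<notin> XE"
    proof
      assume "(p,q) \<in> XE"
      then have e1: "(x1,x2) \<in> EG" and e2: "(w1,w2) \<in> EH" using p q by auto
      have m1: "(x1 \<in> A \<and> x1 \<noteq> a \<and> w1 \<in> VH) \<or> (x1 = a \<and> w1 \<in> B) \<or> (x1 \<in> Pa A a \<and> w1 \<in> B)"
        using pq(1) p memS by blast
      have m2: "(x2 \<in> A \<and> x2 \<noteq> a \<and> w2 \<in> VH) \<or> (x2 = a \<and> w2 \<in> B) \<or> (x2 \<in> Pa A a \<and> w2 \<in> B)"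
        using pq(2) q memS by blast
      have AA: "\<not> (x1 \<in> A \<and> x2 \<in> A)" using iA e1 unfolding indep_def by blast
      have BB: "\<not> (w1 \<in> B \<and> w2 \<in> B)" using iB e2 unfolding indep_def by blast
      have P1: "x1 = a" if "x2 \<in> Pa A a" "x1 \<in> A" using that e1 unfolding Pa_def by blast
      have P2: "x2 = a" if "x1 \<in> Pa A a" "x2 \<in> A" using that symG'[OF e1] unfolding Pa_def by blast
      have aA: "a \<in> A" by fact
      have PA: "x \<in> Pa A a \<Longrightarrow> x \<notin> A" for x unfolding Pa_def by blast
      show False using m1 m2 AA BB P1 P2 aA by blast
    qed
  qed
  have domS: "dominating XV XE S" unfolding dominating_def dprod_verts_def
  proof (intro conjI ballI)
    show "S \<subseteq> VG \<times> VH" unfolding S_def using AV BV PV a by blast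
    fix p assume "p \<in> VG \<times> VH"
    then obtain x w where p: "p = (x,w)" "x \<in> VG" "w \<in> VH" by blast
    show "p \<in> S \<or> (\<exists>u\<in>S. (u, p) \<in> XE)"
    proof (cases "x \<in> A")
      case True
      show ?thesis
      proof (cases "x = a")
        case False then show ?thesis using True p memS by blast
      next
        case xa: True
        show ?thesis
        proof (cases "w \<in> B")
          case True then show ?thesis using xa p memS by blast
        next
          case False
          then obtain b where b: "b \<in> B" "(b,w) \<in> EH" using dB p unfolding dominating_def by blast
          have "(p0,b) \<in> S" using p0 b memS by blast
          moreover have "(a,p0) \<in> EG" using p0 unfolding Pa_def by blast
          then have "((p0,b),p) \<in> XE" using b p xa symG' by auto
          ultimately show ?thesis by blast
        qed
      qed
    next
      case False
      then obtain a' where a': "a' \<in> A" "(a',x) \<in> EG" using dA p unfolding dominating_def by blast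
      show ?thesis
      proof (cases "\<exists>a''\<in>A. a'' \<noteq> a \<and> (a'',x) \<in> EG")
        case True
        then obtain a'' where a'': "a'' \<in> A" "a'' \<noteq> a" "(a'',x) \<in> EG" by blast
        obtain w' where w': "w' \<in> VH" "(w',w) \<in> EH" using nH' p by blast
        have "(a'',w') \<in> S" using a'' w' memS by blast
        moreover have "((a'',w'),p) \<in> XE" using a'' w' p by simp
        ultimately show ?thesis by blast
      next
        case nf: False
        then have "a' = a" using a' by blast
        then have xP: "x \<in> Pa A a" using nf a' p False unfolding Pa_def by blast
        show ?thesis
        proof (cases "w \<in> B")
          case True then show ?thesis using xP p memS by blast
        next
          case False
          then obtain b where b: "b \<in> B" "(b,w) \<in> EH" using dB p unfolding dominating_def by blast
          have "(a,b) \<in> S" using b memS by blast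
          moreover have "((a,b),p) \<in> XE" using b p a' \<open>a' = a\<close> by simp
          ultimately show ?thesis by blast
        qed
      qed
    qed
  qed
  have "minimal_dominating XV XE S" using indS domS by (intro maxind_minimal) (simp add: maxind_def)
  then have eq: "card (A \<times> VH) = card S" using wd_eq[OF wd col_min[OF A]] by blast
  have finA: "finite A" using AV finG finite_subset by blast
  have finB: "finite B" using BV finH finite_subset by blast
  have finP: "finite (Pa A a)" using PV finG finite_subset by blast
  have "card S = card ((A - {a}) \<times> VH) + (card ({a} \<times> B) + card (Pa A a \<times> B))"
  proof -
    have d1: "(A - {a}) \<times> VH \<inter> ({a} \<times> B \<union> Pa A a \<times> B) = {}" using PV by blast
    have d2: "{a} \<times> B \<inter> Pa A a \<times> B = {}" using PV a by blast
    have f1: "finite ((A - {a}) \<times> VH)" using finA finH by simp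
    have f2: "finite ({a} \<times> B)" "finite (Pa A a \<times> B)" using finB finP by auto
    have "card ({a} \<times> B \<union> Pa A a \<times> B) = card ({a} \<times> B) + card (Pa A a \<times> B)"
      using card_Un_disjoint[OF f2 d2] .
    moreover have "card S = card ((A - {a}) \<times> VH) + card ({a} \<times> B \<union> Pa A a \<times> B)"
      unfolding S_def using card_Un_disjoint[OF f1 _ d1] f2 by simp
    ultimately show ?thesis by simp
  qed
  also have "\<dots> = (card A - 1) * card VH + (card B + card (Pa A a) * card B)"
    using finA a by (simp add: card_cartesian_product)
  finally have eqn: "card A * card VH = (card A - 1) * card VH + (card B + card (Pa A a) * card B)"
    using eq by (simp add: card_cartesian_product)
  have "card A \<noteq> 0" using finA a by auto
  then obtain m where m: "card A = Suc m" by (cases "card A") auto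
  from eqn m have "card VH + m * card VH = m * card VH + (card B + card (Pa A a) * card B)" by simp
  then show ?thesis by (simp add: algebra_simps)
qed

end

context twog begin

lemma half:
  assumes wd: "well_dominated XV XE" and conn: "connected_graph VG EG"
    and yz: "(y,z) \<in> EH" and zh: "(z,h) \<in> EH" and hy: "h \<noteq> y"
  shows "\<forall>u\<in>VG. \<forall>w\<in>VG. u \<noteq> w \<longrightarrow> (u,w) \<in> EG"
proof -
  obtain B0 where B0: "maxind VH EH B0" using maxind_exists0[OF sH] by blast
  have yV: "y \<in> VH" using inH yz by blast
  have B0V: "B0 \<subseteq> VH" using B0 unfolding maxind_def dominating_def by blast
  have B0ne: "B0 \<noteq> {}" using maxind_nonempty[OF B0] yV by blast
  have beta: "card B0 > 0" using B0ne B0V finH by (meson card_gt_0_iff finite_subset)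
  have key: "card VH = card B0 * (1 + card (Pa A a))" if A: "maxind VG EG A" and a: "a \<in> A" for A a
    using I2[OF wd A a B0 W1[OF wd yz zh hy A a]] .
  have eqA: "card A * card VH = card VG * card B0" if A: "maxind VG EG A" for A
    using wd_eq[OF wd col_min[OF A] row_min[OF B0]] by (simp add: card_cartesian_product)
  have clique: "(x,w) \<in> EG" if vx: "(v,x) \<in> EG" and vw: "(v,w) \<in> EG" and xw: "x \<noteq> w" for v x w
  proof (rule ccontr)
    assume nxw: "(x,w) \<notin> EG"
    have "indep EG {x,w}" unfolding indep_def using nxw symG' irrG' by blast
    moreover have "{x,w} \<subseteq> VG" using inG vx vw by blast
    ultimately obtain A where xwA: "{x,w} \<subseteq> A" and A: "maxind VG EG A"
      using maxind_exists[OF sG] by blast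
    have iA: "indep EG A" and dA: "dominating VG EG A" using A unfolding maxind_def by auto
    have AV: "A \<subseteq> VG" using dA unfolding dominating_def by blast
    have finA: "finite A" using AV finG finite_subset by blast
    have xA: "x \<in> A" using xwA by blast
    have vV: "v \<in> VG" using inG vx by blast
    have vA: "v \<notin> A" using iA xA vx unfolding indep_def by blast
    define k where "k = card (Pa A x)"
    have allk: "card (Pa A a) = k" if "a \<in> A" for a
    proof -
      have "card B0 * (1 + card (Pa A a)) = card B0 * (1 + card (Pa A x))"
        using key[OF A that] key[OF A xA] by linarith
      then show ?thesis using beta unfolding k_def by simp
    qed
    have "card A * (card B0 * (1 + k)) = card VG * card B0" using eqA[OF A] key[OF A xA] k_def by simp
    then have "(card A * (1 + k)) * card B0 = card VG * card B0" by (simp only: ac_simps)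
    then have cVG: "card VG = card A * (1 + k)" using beta by simp
    let ?U = "\<Union>(Pa A ` A)"
    have Usub: "?U \<subseteq> VG - A" unfolding Pa_def by blast
    have finP: "\<forall>a\<in>A. finite (Pa A a)" using finG unfolding Pa_def by simp
    have disj: "\<forall>a\<in>A. \<forall>b\<in>A. a \<noteq> b \<longrightarrow> Pa A a \<inter> Pa A b = {}" unfolding Pa_def by blast
    have "card ?U = (\<Sum>a\<in>A. card (Pa A a))" using card_UN_disjoint[OF finA finP disj] .
    also have "\<dots> = (\<Sum>a\<in>A. k)" using allk by simp
    also have "\<dots> = card A * k" by simp
    finally have cU: "card ?U = card A * k" .
    have "card (VG - A) = card VG - card A" using card_Diff_subset[OF finA AV] .
    then have "card (VG - A) = card A * k" using cVG by simp
    then have "?U = VG - A" using card_subset_eq[OF _ Usub] finG cU by simp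
    then have "v \<in> ?U" using vV vA by blast
    then obtain a where a: "a \<in> A" "v \<in> Pa A a" by blast
    have "x = a" using a xA symG'[OF vx] unfolding Pa_def by blast
    moreover have "w = a" using a xwA symG'[OF vw] unfolding Pa_def by blast
    ultimately show False using xw by simp
  qed
  show ?thesis
  proof (intro ballI impI)
    fix u w assume u: "u \<in> VG" and w: "w \<in> VG" and uw: "u \<noteq> w"
    have "(u,w) \<in> EG\<^sup>*" using conn u w unfolding connected_graph_def by blast
    then have "w = u \<or> (u,w) \<in> EG"
    proof (induction rule: rtrancl_induct)
      case base then show ?case by simp
    next
      case (step y' z')
      show ?case
      proof (cases "y' = u")
        case True then show ?thesis using step by simp
      next
        case False
        then have "(u,y') \<in> EG" using step by simp
        then show ?thesis using clique[OF symG'[OF \<open>(u,y') \<in> EG\<close>] \<open>(y',z') \<in> EG\<close>] by blast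
      qed
    qed
    then show "(u,w) \<in> EG" using uw by simp
  qed
qed

lemma Kn:
  assumes wd: "well_dominated XV XE"
    and cG: "\<forall>u\<in>VG. \<forall>w\<in>VG. u \<noteq> w \<longrightarrow> (u,w) \<in> EG"
    and cH: "\<forall>u\<in>VH. \<forall>w\<in>VH. u \<noteq> w \<longrightarrow> (u,w) \<in> EH"
    and g3: "card VG \<ge> 3" and h3: "card VH \<ge> 3"
  shows "card VG = 3 \<and> card VH = 3"
proof -
  have eG: "(u,w) \<in> EG \<longleftrightarrow> u \<in> VG \<and> w \<in> VG \<and> u \<noteq> w" for u w
    using cG inG irrG' by blast
  have eH: "(u,w) \<in> EH \<longleftrightarrow> u \<in> VH \<and> w \<in> VH \<and> u \<noteq> w" for u w
    using cH inH irrH' by blast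
  obtain a x u where g: "a \<in> VG" "x \<in> VG" "u \<in> VG" "a \<noteq> x" "a \<noteq> u" "x \<noteq> u" using three_elems[OF g3] by blast
  obtain b y t where h: "b \<in> VH" "y \<in> VH" "t \<in> VH" "b \<noteq> y" "b \<noteq> t" "y \<noteq> t" using three_elems[OF h3] by blast
  define D where "D = {(a,b),(a,y),(x,b)}"
  have XE: "((p1,p2),(q1,q2)) \<in> XE \<longleftrightarrow> p1 \<in> VG \<and> q1 \<in> VG \<and> p1 \<noteq> q1 \<and> p2 \<in> VH \<and> q2 \<in> VH \<and> p2 \<noteq> q2"
    for p1 p2 q1 q2 using eG eH by simp
  have domD: "dominating XV XE D" unfolding dominating_def dprod_verts_def
  proof (intro conjI ballI)
    show "D \<subseteq> VG \<times> VH" unfolding D_def using g h by blast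
    fix p assume "p \<in> VG \<times> VH"
    then obtain g' k where p: "p = (g',k)" "g' \<in> VG" "k \<in> VH" by blast
    show "p \<in> D \<or> (\<exists>v\<in>D. (v, p) \<in> XE)"
    proof (cases "g' = a")
      case True
      then show ?thesis
      proof (cases "k = b \<or> k = y")
        case True then show ?thesis using p \<open>g' = a\<close> unfolding D_def by blast
      next
        case False
        then have "((x,b),p) \<in> XE" using p True g h XE by auto
        then show ?thesis unfolding D_def by blast
      qed
    next
      case False
      show ?thesis
      proof (cases "k = b")
        case True
        show ?thesis
        proof (cases "g' = x")
          case True then show ?thesis using p \<open>k = b\<close> unfolding D_def by blast
        next
          case False
          then have "((a,y),p) \<in> XE" using p \<open>k = b\<close> \<open>g' \<noteq> a\<close> g h XE by auto
          then show ?thesis unfolding D_def by blast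
        qed
      next
        case False
        then have "((a,b),p) \<in> XE" using p \<open>g' \<noteq> a\<close> g h XE by auto
        then show ?thesis unfolding D_def by blast
      qed
    qed
  qed
  have notdom: "\<not> dominating XV XE (D - {d})" if "d \<in> D" for d
  proof
    assume dd: "dominating XV XE (D - {d})"
    have wit: "\<exists>q\<in>XV. q \<notin> D - {d} \<and> (\<forall>v\<in>D - {d}. (v,q) \<notin> XE)"
    proof -
      from that consider "d = (a,b)" | "d = (a,y)" | "d = (x,b)" unfolding D_def by blast
      then show ?thesis
      proof cases
        case 1
        have "D - {d} = {(a,y),(x,b)}" using 1 g h unfolding D_def by auto
        then show ?thesis using g h 1 XE by (intro bexI[of _ "(a,b)"]) (auto simp: dprod_verts_def)
      next
        case 2
        have "D - {d} = {(a,b),(x,b)}" using 2 g h unfolding D_def by auto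
        then show ?thesis using g h 2 XE by (intro bexI[of _ "(u,b)"]) (auto simp: dprod_verts_def)
      next
        case 3
        have "D - {d} = {(a,b),(a,y)}" using 3 g h unfolding D_def by auto
        then show ?thesis using g h 3 XE by (intro bexI[of _ "(a,t)"]) (auto simp: dprod_verts_def)
      qed
    qed
    then show False using dd unfolding dominating_def by blast
  qed
  have minD: "minimal_dominating XV XE D" unfolding minimal_dominating_iff using domD notdom by blast
  have cD: "card D = 3" unfolding D_def using g h by auto
  have a1: "maxind VG EG {a}" unfolding maxind_def indep_def dominating_def using g eG by auto
  have b1: "maxind VH EH {b}" unfolding maxind_def indep_def dominating_def using h eH by auto
  have "card ({a} \<times> VH) = 3" using wd_eq[OF wd col_min[OF a1] minD] cD by simp
  moreover have "card (VG \<times> {b}) = 3" using wd_eq[OF wd row_min[OF b1] minD] cD by simp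
  ultimately show ?thesis by (simp add: card_cartesian_product)
qed

end

definition leafE :: "('a \<times> 'a) set \<Rightarrow> 'a \<Rightarrow> bool" where
  "leafE E w \<longleftrightarrow> (\<exists>u. \<forall>x. (w,x) \<in> E \<longleftrightarrow> x = u)"

locale hgraph =
  fixes V :: "'b set" and E :: "('b \<times> 'b) set"
  assumes sH: "simple_graph V E" and cH: "connected_graph V E" and c2: "card V \<ge> 2"
    and T: "\<And>v l1 l2. (\<forall>x. (l1,x) \<in> E \<longleftrightarrow> x = v) \<Longrightarrow> (\<forall>x. (l2,x) \<in> E \<longleftrightarrow> x = v) \<Longrightarrow> l1 = l2"
    and S: "\<And>v u a. (v,u) \<in> E \<Longrightarrow> (u,a) \<in> E \<Longrightarrow> a \<noteq> v \<Longrightarrow> (\<forall>w. (v,w) \<in> E \<longrightarrow> \<not> leafE E w)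
             \<Longrightarrow> \<exists>h. (a,h) \<in> E \<and> h \<noteq> u \<and> (\<forall>x. (h,x) \<in> E \<longrightarrow> x = a \<or> x = v)"
begin

lemma fin: "finite V" and EV: "E \<subseteq> V \<times> V" and symE: "sym E" and irr: "irrefl E"
  using sH unfolding simple_graph_def by auto
lemma sym': "(u,v) \<in> E \<Longrightarrow> (v,u) \<in> E" using symE by (blast dest: symD)
lemma irr': "(u,u) \<notin> E" using irr by (simp add: irrefl_def)
lemma inV: "(u,v) \<in> E \<Longrightarrow> u \<in> V \<and> v \<in> V" using EV by blast
lemma nbr: "v \<in> V \<Longrightarrow> \<exists>u. (v,u) \<in> E" using has_nbr[OF sH cH c2] by blast

lemma nonleaf_two: "\<not> leafE E u \<Longrightarrow> (u,v) \<in> E \<Longrightarrow> \<exists>a. (u,a) \<in> E \<and> a \<noteq> v"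
  unfolding leafE_def by blast

lemma leaf_nb: "leafE E w \<Longrightarrow> (w,x) \<in> E \<Longrightarrow> (w,y) \<in> E \<Longrightarrow> x = y"
  unfolding leafE_def by auto

lemma leafI: "(w,u) \<in> E \<Longrightarrow> (\<forall>x. (w,x) \<in> E \<longrightarrow> x = u) \<Longrightarrow> leafE E w"
  unfolding leafE_def by blast

lemma NL:
  assumes v0: "v0 \<in> V" "\<not> leafE E v0" "\<forall>w. (v0,w) \<in> E \<longrightarrow> \<not> leafE E w"
  shows "\<forall>v\<in>V. \<not> leafE E v"
proof -
  let ?W = "{v \<in> V. \<not> leafE E v \<and> (\<forall>w. (v,w) \<in> E \<longrightarrow> \<not> leafE E w)}"
  have "V \<subseteq> ?W"
  proof (rule closed_all[OF cH, of v0])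
    show "v0 \<in> ?W" using v0 by blast
    show "v0 \<in> V" by fact
    fix v u assume vW: "v \<in> ?W" and vu: "(v,u) \<in> E"
    have uV: "u \<in> V" using inV[OF vu] by blast
    have nlu: "\<not> leafE E u" using vW vu by blast
    have "\<not> leafE E a" if ua: "(u,a) \<in> E" for a
    proof
      assume la: "leafE E a"
      have "a \<noteq> v" using vW la by blast
      then obtain h where h: "(a,h) \<in> E" "h \<noteq> u" using S[OF vu ua] vW by blast
      have "h = u" using leaf_nb[OF la h(1) sym'[OF ua]] .
      with h(2) show False by simp
    qed
    then show "u \<in> ?W" using uV nlu by blast
  qed
  then show ?thesis by blast
qed

lemma C4_case:
  assumes noleaf: "\<forall>v\<in>V. \<not> leafE E v"
  shows "graph_iso V E (C_verts 4) (C_edges 4)"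
proof -
  have nl: "\<not> leafE E w" if "(x,w) \<in> E" for x w using noleaf inV[OF that] by blast
  have nlv: "\<forall>w. (x,w) \<in> E \<longrightarrow> \<not> leafE E w" for x using nl by blast
  obtain v where v: "v \<in> V" using c2 by (metis card.empty ex_in_conv not_numeral_le_zero)
  obtain u where vu: "(v,u) \<in> E" using nbr[OF v] by blast
  obtain a where ua: "(u,a) \<in> E" and av: "a \<noteq> v" using nonleaf_two[OF nl[OF vu] sym'[OF vu]] by blast
  obtain h where ah: "(a,h) \<in> E" and hu: "h \<noteq> u" and Nh: "\<forall>x. (h,x) \<in> E \<longrightarrow> x = a \<or> x = v"
    using S[OF vu ua av nlv] by blast
  have hv: "(h,v) \<in> E"
  proof (rule ccontr)
    assume "(h,v) \<notin> E"
    then have "leafE E h" using Nh sym'[OF ah] by (intro leafI[of h a]) auto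
    with nl[OF ah] show False by simp
  qed
  have Na0: "(w,a) \<in> E \<and> (\<forall>x. (a,x) \<in> E \<longrightarrow> x = w \<or> x = h)" if vw: "(v,w) \<in> E" and wh: "w \<noteq> h" for w
  proof -
    obtain h' where h': "(w,h') \<in> E" "h' \<noteq> v" "\<forall>x. (h',x) \<in> E \<longrightarrow> x = w \<or> x = h"
      using S[OF hv vw wh nlv] by blast
    have "(h',h) \<in> E"
    proof (rule ccontr)
      assume "(h',h) \<notin> E"
      then have "leafE E h'" using h'(3) sym'[OF h'(1)] by (intro leafI[of h' w]) auto
      with nl[OF h'(1)] show False by simp
    qed
    then have "h' = a" using Nh sym' h'(2) by blast
    then show ?thesis using h' by blast
  qed
  have Na: "\<forall>x. (a,x) \<in> E \<longrightarrow> x = u \<or> x = h" using Na0[OF vu hu[symmetric]] by blast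
  have Nv: "\<forall>x. (v,x) \<in> E \<longrightarrow> x = u \<or> x = h"
  proof (intro allI impI)
    fix w assume vw: "(v,w) \<in> E"
    show "w = u \<or> w = h"
    proof (cases "w = h")
      case False
      then have "(w,a) \<in> E" using Na0[OF vw] by blast
      then show ?thesis using Na sym' by blast
    qed simp
  qed
  obtain hs where hs: "(a,hs) \<in> E" "hs \<noteq> h" "\<forall>x. (hs,x) \<in> E \<longrightarrow> x = a \<or> x = v"
    using S[OF sym'[OF hv] sym'[OF ah] av nlv] by blast
  have "hs = u" using hs Na by blast
  then have Nu: "\<forall>x. (u,x) \<in> E \<longrightarrow> x = a \<or> x = v" using hs by blast
  have d1: "v \<noteq> u" using vu irr' by auto
  have d2: "u \<noteq> a" using ua irr' by auto
  have d3: "a \<noteq> h" using ah irr' by auto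
  have d4: "h \<noteq> v" using hv irr' by auto
  have d: "v \<noteq> u" "u \<noteq> a" "a \<noteq> h" "h \<noteq> v" "v \<noteq> a" "u \<noteq> h" using d1 d2 d3 d4 av hu by auto
  have VS: "V = {v,u,a,h}"
  proof
    show "V \<subseteq> {v,u,a,h}"
    proof (rule closed_all[OF cH, of v])
      show "v \<in> {v,u,a,h}" "v \<in> V" using v by auto
      fix x y assume "x \<in> {v,u,a,h}" "(x,y) \<in> E"
      then show "y \<in> {v,u,a,h}" using Nv Nu Na Nh by blast
    qed
    show "{v,u,a,h} \<subseteq> V" using inV vu ua ah by blast
  qed
  define g where "g i = (if i = 0 then v else if i = (1::nat) then u else if i = 2 then a else h)" for i
  have av': "(v,a) \<notin> E" using Nv d by blast
  have uh': "(u,h) \<notin> E" using Nu d by blast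
  have lt4: "i < 4 \<longleftrightarrow> i = 0 \<or> i = 1 \<or> i = 2 \<or> i = (3::nat)" for i by auto
  have "bij_betw g (C_verts 4) V"
  proof (rule bij_betw_imageI)
    have C4: "C_verts 4 = {0,1,2,3}" unfolding C_verts_def by auto
    show "inj_on g (C_verts 4)"
    proof (rule inj_onI)
      fix i j assume "i \<in> C_verts 4" "j \<in> C_verts 4" "g i = g j"
      moreover have "i = 0 \<or> i = 1 \<or> i = 2 \<or> i = 3" "j = 0 \<or> j = 1 \<or> j = 2 \<or> j = 3"
        using calculation(1,2) C4 by auto
      ultimately show "i = j" unfolding g_def using d by (elim disjE) simp_all
    qed
    show "g ` C_verts 4 = V" unfolding VS C4 g_def by (simp add: insert_commute)
  qed
  moreover have "\<forall>i\<in>C_verts 4. \<forall>j\<in>C_verts 4. (i,j) \<in> C_edges 4 \<longleftrightarrow> (g i, g j) \<in> E"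
  proof (intro ballI)
    fix i j assume "i \<in> C_verts 4" "j \<in> C_verts 4"
    then have "i = 0 \<or> i = 1 \<or> i = 2 \<or> i = 3" "j = 0 \<or> j = 1 \<or> j = 2 \<or> j = 3"
      using lt4[of i] lt4[of j] unfolding C_verts_def by auto
    moreover have "(u,v) \<in> E" "(a,u) \<in> E" "(h,a) \<in> E" "(v,h) \<in> E" "(a,v) \<notin> E" "(h,u) \<notin> E"
      using sym' vu ua ah hv av' uh' by blast+
    moreover have "(x,x) \<notin> E" for x using irr' .
    ultimately show "(i,j) \<in> C_edges 4 \<longleftrightarrow> (g i, g j) \<in> E"
      using vu ua ah hv av' uh' d unfolding C_edges_def g_def
      by (elim disjE) simp_all
  qed
  ultimately have "graph_iso (C_verts 4) (C_edges 4) V E" unfolding graph_iso_def by blast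
  then show ?thesis by (rule graph_iso_sym)
qed

end

context hgraph begin

definition nb :: "'b \<Rightarrow> 'b" where "nb l = (THE u. \<forall>x. (l,x) \<in> E \<longleftrightarrow> x = u)"

lemma nbP: "leafE E l \<Longrightarrow> (l,x) \<in> E \<longleftrightarrow> x = nb l"
proof -
  assume "leafE E l"
  then obtain u where u: "\<forall>x. (l,x) \<in> E \<longleftrightarrow> x = u" unfolding leafE_def by blast
  have "nb l = u" unfolding nb_def
  proof (rule the_equality)
    show "\<forall>x. (l,x) \<in> E \<longleftrightarrow> x = u" by fact
    fix u' assume "\<forall>x. (l,x) \<in> E \<longleftrightarrow> x = u'"
    then show "u' = u" using u by blast
  qed
  then show ?thesis using u by simp
qed

lemma nbE: "leafE E l \<Longrightarrow> (l, nb l) \<in> E" using nbP by blast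

lemma corona_case:
  assumes someleaf: "\<exists>l\<in>V. leafE E l"
  shows "\<exists>(VF::nat set) EF. simple_graph VF EF \<and> connected_graph VF EF \<and>
           graph_iso V E (corona_verts VF) (corona_edges VF EF)"
proof -
  have nonleaf_has: "\<exists>l. (s,l) \<in> E \<and> leafE E l" if "s \<in> V" "\<not> leafE E s" for s
  proof (rule ccontr)
    assume "\<not> (\<exists>l. (s,l) \<in> E \<and> leafE E l)"
    then have "\<forall>v\<in>V. \<not> leafE E v" using NL[OF that] by blast
    with someleaf show False by blast
  qed
  define S where "S = {v \<in> V. \<not> leafE E v}"
  show ?thesis
  proof (cases "S = {}")
    case True
    then have allleaf: "\<forall>v\<in>V. leafE E v" unfolding S_def by blast
    obtain h0 where h0: "h0 \<in> V" using someleaf by blast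
    define h1 where "h1 = nb h0"
    have e01: "(h0,h1) \<in> E" using nbE allleaf h0 h1_def by blast
    have e10: "(h1,h0) \<in> E" using sym'[OF e01] .
    have h1V: "h1 \<in> V" using inV[OF e01] by blast
    have n0: "\<forall>x. (h0,x) \<in> E \<longrightarrow> x = h1" using nbP allleaf h0 h1_def by blast
    have n1: "\<forall>x. (h1,x) \<in> E \<longrightarrow> x = h0" using nbP[of h1] allleaf h1V e10 by metis
    have d: "h0 \<noteq> h1" using e01 irr' by auto
    have VS: "V = {h0,h1}"
    proof
      show "V \<subseteq> {h0,h1}"
        by (rule closed_all[OF cH, of h0]) (use h0 n0 n1 in auto)
      show "{h0,h1} \<subseteq> V" using h0 h1V by blast
    qed
    let ?VF = "{0::nat}" and ?EF = "{} :: (nat \<times> nat) set"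
    have s: "simple_graph ?VF ?EF" unfolding simple_graph_def by (auto simp: sym_def irrefl_def)
    have c: "connected_graph ?VF ?EF" unfolding connected_graph_def by auto
    define \<phi> where "\<phi> p = (if snd p then h1 else h0)" for p :: "nat \<times> bool"
    have cv: "corona_verts ?VF = {(0,False),(0,True)}" unfolding corona_verts_def by auto
    have "bij_betw \<phi> (corona_verts ?VF) V"
    proof (rule bij_betw_imageI)
      show "inj_on \<phi> (corona_verts ?VF)" unfolding cv \<phi>_def inj_on_def using d by auto
      show "\<phi> ` corona_verts ?VF = V" unfolding cv \<phi>_def VS by auto
    qed
    moreover have "\<forall>p\<in>corona_verts ?VF. \<forall>q\<in>corona_verts ?VF. (p,q) \<in> corona_edges ?VF ?EF \<longleftrightarrow> (\<phi> p, \<phi> q) \<in> E"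
      unfolding cv \<phi>_def using e01 e10 irr' by auto
    ultimately have "graph_iso (corona_verts ?VF) (corona_edges ?VF ?EF) V E" unfolding graph_iso_def by blast
    then show ?thesis using s c graph_iso_sym by blast
  next
    case False
    have SV: "S \<subseteq> V" unfolding S_def by blast
    have finS: "finite S" using fin SV finite_subset by blast
    have nbS: "nb l \<in> S" if l: "l \<in> V" "leafE E l" for l
    proof (rule ccontr)
      assume "nb l \<notin> S"
      have e: "(l, nb l) \<in> E" using nbE[OF l(2)] .
      have nlV: "nb l \<in> V" using inV[OF e] by blast
      then have lnl: "leafE E (nb l)" using \<open>nb l \<notin> S\<close> unfolding S_def by blast
      have n1: "\<forall>x. (nb l, x) \<in> E \<longrightarrow> x = l" using nbP[OF lnl] sym'[OF e] by metis
      have n0: "\<forall>x. (l, x) \<in> E \<longrightarrow> x = nb l" using nbP[OF l(2)] by blast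
      have "V \<subseteq> {l, nb l}"
        by (rule closed_all[OF cH, of l]) (use l n0 n1 in auto)
      then have "S = {}" unfolding S_def using l(2) lnl by auto
      with False show False by simp
    qed
    define lf where "lf s = (SOME l. (s,l) \<in> E \<and> leafE E l)" for s
    have lfP: "(s, lf s) \<in> E \<and> leafE E (lf s)" if "s \<in> S" for s
    proof -
      have "\<exists>l. (s,l) \<in> E \<and> leafE E l" using nonleaf_has that unfolding S_def by blast
      then show ?thesis unfolding lf_def by (rule someI_ex)
    qed
    have nb_lf: "nb (lf s) = s" if "s \<in> S" for s
      using lfP[OF that] nbP sym' by metis
    have lf_unique: "l = lf s" if "s \<in> S" "(s,l) \<in> E" "leafE E l" for s l
    proof (rule T)
      show "\<forall>x. (l,x) \<in> E \<longleftrightarrow> x = s" using nbP[OF that(3)] sym'[OF that(2)] by metis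
      show "\<forall>x. (lf s,x) \<in> E \<longleftrightarrow> x = s" using nbP lfP[OF that(1)] nb_lf[OF that(1)] by metis
    qed
    have lf_nb: "lf (nb l) = l" if "l \<in> V" "leafE E l" for l
      using lf_unique[OF nbS[OF that] sym'[OF nbE[OF that(2)]] that(2)] by simp
    obtain \<sigma> where \<sigma>: "bij_betw \<sigma> S {0..<card S}" using ex_bij_betw_finite_nat[OF finS] by blast
    define \<tau> where "\<tau> = inv_into S \<sigma>"
    define VF where "VF = {0..<card S}"
    have \<tau>1: "\<tau> i \<in> S \<and> \<sigma> (\<tau> i) = i" if "i \<in> VF" for i
      using \<sigma> that unfolding \<tau>_def VF_def
      by (metis bij_betw_def bij_betw_inv_into_right inv_into_into)
    have \<tau>2: "\<sigma> s \<in> VF \<and> \<tau> (\<sigma> s) = s" if "s \<in> S" for s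
      using \<sigma> that unfolding \<tau>_def VF_def
      by (metis bij_betwE bij_betw_inv_into_left)
    define EF where "EF = {(i,j). i \<in> VF \<and> j \<in> VF \<and> (\<tau> i, \<tau> j) \<in> E}"
    have sF: "simple_graph VF EF" unfolding simple_graph_def
    proof (intro conjI)
      show "finite VF" unfolding VF_def by simp
      show "EF \<subseteq> VF \<times> VF" unfolding EF_def by blast
      show "sym EF" unfolding EF_def sym_def using sym' by blast
      show "irrefl EF" unfolding EF_def irrefl_def using irr' by blast
    qed
    define f where "f w = (if leafE E w then nb w else w)" for w
    have reach: "(\<sigma> s, \<sigma> (f w)) \<in> EF\<^sup>*" if "(s,w) \<in> E\<^sup>*" "s \<in> S" for s w
      using that(1)
    proof (induction rule: rtrancl_induct)
      case base
      then show ?case using that(2) unfolding f_def S_def by simp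
    next
      case (step w w')
      have wV: "w \<in> V" and w'V: "w' \<in> V" using inV[OF step(2)] by auto
      show ?case
      proof (cases "leafE E w")
        case True
        then have "nb w = w'" using nbP[OF True, of w'] step(2) by simp
        then have "\<not> leafE E w'" using nbS[OF wV True] unfolding S_def by blast
        then have "f w' = f w" unfolding f_def using True \<open>nb w = w'\<close> by simp
        then show ?thesis using step(3) by simp
      next
        case nlw: False
        show ?thesis
        proof (cases "leafE E w'")
          case True
          then have "nb w' = w" using nbP[OF True, of w] sym'[OF step(2)] by simp
          then have "f w' = f w" unfolding f_def using True nlw by simp
          then show ?thesis using step(3) by simp
        next
          case False
          have wS: "w \<in> S" and w'S: "w' \<in> S" using wV w'V nlw False unfolding S_def by auto
          have "(\<sigma> w, \<sigma> w') \<in> EF" unfolding EF_def using \<tau>2[OF wS] \<tau>2[OF w'S] step(2) by simp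
          then show ?thesis using step(3) nlw False unfolding f_def by simp
        qed
      qed
    qed
    have cF: "connected_graph VF EF" unfolding connected_graph_def
    proof (intro conjI ballI)
      show "VF \<noteq> {}" unfolding VF_def using False finS by (simp add: card_gt_0_iff)
      fix i j assume ij: "i \<in> VF" "j \<in> VF"
      have "(\<tau> i, \<tau> j) \<in> E\<^sup>*" using cH \<tau>1[OF ij(1)] \<tau>1[OF ij(2)] SV unfolding connected_graph_def by blast
      from reach[OF this] \<tau>1[OF ij(1)] \<tau>1[OF ij(2)]
      show "(i,j) \<in> EF\<^sup>*" unfolding f_def S_def by simp
    qed
    define \<phi> where "\<phi> p = (if snd p then lf (\<tau> (fst p)) else \<tau> (fst p))" for p
    have cv: "corona_verts VF = VF \<times> UNIV" unfolding corona_verts_def by simp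
    have lfS: "\<not> leafE E (\<tau> i)" "leafE E (lf (\<tau> i))" "(\<tau> i, lf (\<tau> i)) \<in> E" "\<tau> i \<in> V" if "i \<in> VF" for i
      using \<tau>1[OF that] lfP SV unfolding S_def by auto
    have \<tau>inj: "\<tau> i = \<tau> j \<Longrightarrow> i \<in> VF \<Longrightarrow> j \<in> VF \<Longrightarrow> i = j" for i j using \<tau>1 by metis
    have "bij_betw \<phi> (corona_verts VF) V"
    proof (rule bij_betw_imageI)
      show "inj_on \<phi> (corona_verts VF)"
      proof (rule inj_onI)
        fix p q assume pq: "p \<in> corona_verts VF" "q \<in> corona_verts VF" "\<phi> p = \<phi> q"
        obtain i b where p: "p = (i,b)" "i \<in> VF" using pq(1) cv by auto
        obtain j c where q: "q = (j,c)" "j \<in> VF" using pq(2) cv by auto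
        show "p = q"
        proof (cases b; cases c)
          assume "b" "c"
          then have "lf (\<tau> i) = lf (\<tau> j)" using pq(3) p q \<phi>_def by simp
          then have "\<tau> i = \<tau> j" using nb_lf \<tau>1 p q by metis
          then show ?thesis using \<tau>inj p q \<open>b\<close> \<open>c\<close> by simp
        next
          assume "b" "\<not> c"
          then have "lf (\<tau> i) = \<tau> j" using pq(3) p q \<phi>_def by simp
          then show ?thesis using lfS[OF p(2)] lfS[OF q(2)] by simp
        next
          assume "\<not> b" "c"
          then have "\<tau> i = lf (\<tau> j)" using pq(3) p q \<phi>_def by simp
          then show ?thesis using lfS[OF p(2)] lfS[OF q(2)] by simp
        next
          assume "\<not> b" "\<not> c"
          then have "\<tau> i = \<tau> j" using pq(3) p q \<phi>_def by simp
          then show ?thesis using \<tau>inj p q \<open>\<not> b\<close> \<open>\<not> c\<close> by simp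
        qed
      qed
      show "\<phi> ` corona_verts VF = V"
      proof
        have "lf (\<tau> i) \<in> V" if "i \<in> VF" for i using inV[OF lfS(3)[OF that]] by blast
        then show "\<phi> ` corona_verts VF \<subseteq> V"
          using lfS unfolding cv \<phi>_def by auto
        show "V \<subseteq> \<phi> ` corona_verts VF"
        proof
          fix w assume wV: "w \<in> V"
          show "w \<in> \<phi> ` corona_verts VF"
          proof (cases "leafE E w")
            case True
            have s: "nb w \<in> S" using nbS[OF wV True] .
            have "\<phi> (\<sigma> (nb w), True) = w" unfolding \<phi>_def using \<tau>2[OF s] lf_nb[OF wV True] by simp
            moreover have "(\<sigma> (nb w), True) \<in> corona_verts VF" using \<tau>2[OF s] cv by simp
            ultimately show ?thesis by (metis image_eqI)
          next
            case False
            then have s: "w \<in> S" using wV unfolding S_def by blast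
            have "\<phi> (\<sigma> w, False) = w" unfolding \<phi>_def using \<tau>2[OF s] by simp
            moreover have "(\<sigma> w, False) \<in> corona_verts VF" using \<tau>2[OF s] cv by simp
            ultimately show ?thesis by (metis image_eqI)
          qed
        qed
      qed
    qed
    moreover have "\<forall>p\<in>corona_verts VF. \<forall>q\<in>corona_verts VF. (p,q) \<in> corona_edges VF EF \<longleftrightarrow> (\<phi> p, \<phi> q) \<in> E"
    proof (intro ballI)
      fix p q assume pq: "p \<in> corona_verts VF" "q \<in> corona_verts VF"
      obtain i b where p: "p = (i,b)" "i \<in> VF" using pq(1) cv by auto
      obtain j c where q: "q = (j,c)" "j \<in> VF" using pq(2) cv by auto
      have FT: "(\<tau> i, lf (\<tau> j)) \<in> E \<longleftrightarrow> i = j" if "i \<in> VF" "j \<in> VF" for i j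
      proof
        assume "(\<tau> i, lf (\<tau> j)) \<in> E"
        then have "\<tau> i = nb (lf (\<tau> j))" using nbP[OF lfS(2)[OF that(2)], of "\<tau> i"] sym' by blast
        then have "\<tau> i = \<tau> j" using nb_lf \<tau>1[OF that(2)] by simp
        then show "i = j" using \<tau>inj that by blast
      next
        assume "i = j" then show "(\<tau> i, lf (\<tau> j)) \<in> E" using lfS[OF that(1)] by simp
      qed
      have TT: "(lf (\<tau> i), lf (\<tau> j)) \<notin> E"
      proof
        assume "(lf (\<tau> i), lf (\<tau> j)) \<in> E"
        then have "lf (\<tau> j) = nb (lf (\<tau> i))" using nbP[OF lfS(2)[OF p(2)], of "lf (\<tau> j)"] by blast
        then have "lf (\<tau> j) = \<tau> i" using nb_lf \<tau>1[OF p(2)] by simp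
        then show False using lfS[OF p(2)] lfS[OF q(2)] by simp
      qed
      show "(p,q) \<in> corona_edges VF EF \<longleftrightarrow> (\<phi> p, \<phi> q) \<in> E"
      proof (cases b; cases c)
        assume "b" "c" then show ?thesis using p q TT unfolding \<phi>_def by simp
      next
        assume "b" "\<not> c" then show ?thesis using p q FT[OF q(2) p(2)] sym' unfolding \<phi>_def by auto
      next
        assume "\<not> b" "c" then show ?thesis using p q FT[OF p(2) q(2)] unfolding \<phi>_def by auto
      next
        assume "\<not> b" "\<not> c" then show ?thesis using p q unfolding \<phi>_def EF_def by simp
      qed
    qed
    ultimately have "graph_iso (corona_verts VF) (corona_edges VF EF) V E" unfolding graph_iso_def by blast
    then show ?thesis using sF cF graph_iso_sym by blast
  qed
qed

end

context twog begin

lemma II_T: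
  assumes wd: "well_dominated XV XE" and VG: "VG = {g0,g1}" and g01: "(g0,g1) \<in> EG"
    and l1: "\<forall>x. (l1,x) \<in> EH \<longleftrightarrow> x = v" and l2: "\<forall>x. (l2,x) \<in> EH \<longleftrightarrow> x = v"
  shows "l1 = l2"
proof (rule ccontr)
  assume l12: "l1 \<noteq> l2"
  have g0g1: "g0 \<noteq> g1" using g01 irrG' by auto
  have e1: "(l1,v) \<in> EH" using l1 by blast
  have e2: "(l2,v) \<in> EH" using l2 by blast
  have vV: "v \<in> VH" and l1V: "l1 \<in> VH" and l2V: "l2 \<in> VH" using inH e1 e2 by auto
  define L where "L = {l \<in> VH. \<forall>x. (l,x) \<in> EH \<longleftrightarrow> x = v}"
  have vL: "v \<notin> L" unfolding L_def using irrH' by blast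
  have l12L: "l1 \<in> L" "l2 \<in> L" unfolding L_def using l1V l2V l1 l2 by auto
  have M0: "maxind VG EG {g0}" unfolding maxind_def indep_def dominating_def VG using g01 irrG' by auto
  define S where "S = {g0} \<times> (VH - {v}) \<union> {g1} \<times> L"
  have ind: "indep XE S" unfolding indep_def
  proof (intro ballI)
    fix p q assume "p \<in> S" "q \<in> S"
    then show "(p,q) \<notin> XE" unfolding S_def L_def using irrG' symH' by auto
  qed
  have dom: "dominating XV XE S" unfolding dominating_def dprod_verts_def
  proof (intro conjI ballI)
    show "S \<subseteq> VG \<times> VH" unfolding S_def L_def VG by auto
    fix p assume "p \<in> VG \<times> VH"
    then obtain x w where p: "p = (x,w)" "x = g0 \<or> x = g1" "w \<in> VH" using VG by blast
    show "p \<in> S \<or> (\<exists>u\<in>S. (u, p) \<in> XE)"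
    proof (cases "x = g0")
      case True
      show ?thesis
      proof (cases "w = v")
        case True
        have "((g1,l1),p) \<in> XE" using p \<open>x = g0\<close> True symG'[OF g01] e1 by simp
        then show ?thesis using l12L unfolding S_def by blast
      next
        case False then show ?thesis using p \<open>x = g0\<close> unfolding S_def by blast
      qed
    next
      case False
      then have xg1: "x = g1" using p by blast
      show ?thesis
      proof (cases "w \<in> L")
        case True then show ?thesis using p xg1 unfolding S_def by blast
      next
        case False
        obtain u where wu: "(w,u) \<in> EH" using nH p by blast
        have "\<exists>w'. (w,w') \<in> EH \<and> w' \<noteq> v"
        proof (rule ccontr)
          assume "\<not> (\<exists>w'. (w,w') \<in> EH \<and> w' \<noteq> v)"
          then have "\<forall>x. (w,x) \<in> EH \<longleftrightarrow> x = v" using wu by blast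
          then show False using False p unfolding L_def by blast
        qed
        then obtain w' where w': "(w,w') \<in> EH" "w' \<noteq> v" by blast
        have "(g0,w') \<in> S" unfolding S_def using w' inH by blast
        moreover have "((g0,w'),p) \<in> XE" using p xg1 g01 symH'[OF w'(1)] by simp
        ultimately show ?thesis by blast
      qed
    qed
  qed
  have "minimal_dominating XV XE S" using ind dom by (intro maxind_minimal) (simp add: maxind_def)
  then have eq: "card ({g0} \<times> VH) = card S" using wd_eq[OF wd col_min[OF M0]] by blast
  have finL: "finite L" unfolding L_def using finH by simp
  have "card S = card ({g0} \<times> (VH - {v})) + card ({g1} \<times> L)"
    unfolding S_def by (rule card_Un_disjoint) (use finH finL g0g1 in auto)
  also have "\<dots> = (card VH - 1) + card L" using finH vV by (simp add: card_cartesian_product)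
  finally have "card VH = card VH - 1 + card L" using eq by (simp add: card_cartesian_product)
  moreover have "card L \<ge> 2"
  proof -
    have "{l1,l2} \<subseteq> L" using l12L by blast
    then have "card {l1,l2} \<le> card L" using finL by (rule card_mono[rotated])
    then show ?thesis using l12 by simp
  qed
  moreover have "card VH \<ge> 1" using finH vV by (metis One_nat_def Suc_leI card_gt_0_iff empty_iff)
  ultimately show False by linarith
qed

lemma II_S:
  assumes wd: "well_dominated XV XE" and VG: "VG = {g0,g1}" and g01: "(g0,g1) \<in> EG"
    and vu: "(v,u) \<in> EH" and ua: "(u,a) \<in> EH" and av: "a \<noteq> v"
    and nl: "\<forall>w. (v,w) \<in> EH \<longrightarrow> \<not> leafE EH w"
  shows "\<exists>h. (a,h) \<in> EH \<and> h \<noteq> u \<and> (\<forall>x. (h,x) \<in> EH \<longrightarrow> x = a \<or> x = v)"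
proof (rule ccontr)
  assume nh: "\<not> ?thesis"
  have g0g1: "g0 \<noteq> g1" using g01 irrG' by auto
  have vV: "v \<in> VH" and uV: "u \<in> VH" and aV: "a \<in> VH" using inH vu ua by auto
  have M0: "maxind VG EG {g0}" unfolding maxind_def indep_def dominating_def VG using g01 irrG' by auto
  define D where "D = {g0} \<times> (VH - {v,a}) \<union> {(g1,u)}"
  have dom: "dominating XV XE D" unfolding dominating_def dprod_verts_def
  proof (intro conjI ballI)
    show "D \<subseteq> VG \<times> VH" unfolding D_def VG using uV by auto
    fix p assume "p \<in> VG \<times> VH"
    then obtain x w where p: "p = (x,w)" "x = g0 \<or> x = g1" "w \<in> VH" using VG by blast
    show "p \<in> D \<or> (\<exists>y\<in>D. (y, p) \<in> XE)"
    proof (cases "x = g0")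
      case True
      show ?thesis
      proof (cases "w = v \<or> w = a")
        case True
        have "((g1,u),p) \<in> XE" using p \<open>x = g0\<close> True symG'[OF g01] symH'[OF vu] ua by auto
        then show ?thesis unfolding D_def by blast
      next
        case False then show ?thesis using p \<open>x = g0\<close> unfolding D_def by blast
      qed
    next
      case False
      then have xg1: "x = g1" using p by blast
      show ?thesis
      proof (cases "w = u")
        case True then show ?thesis using p xg1 unfolding D_def by blast
      next
        case wu: False
        have "\<exists>w'. (w,w') \<in> EH \<and> w' \<noteq> v \<and> w' \<noteq> a"
        proof (rule ccontr)
          assume nw: "\<not> (\<exists>w'. (w,w') \<in> EH \<and> w' \<noteq> v \<and> w' \<noteq> a)"
          obtain z where wz: "(w,z) \<in> EH" using nH p by blast
          show False
          proof (cases "(w,a) \<in> EH")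
            case True
            then show False using nh nw wu symH' by blast
          next
            case False
            then have "\<forall>y. (w,y) \<in> EH \<longrightarrow> y = v" using nw by blast
            then have "leafE EH w" "(w,v) \<in> EH" using wz unfolding leafE_def by auto
            then show False using nl symH' by blast
          qed
        qed
        then obtain w' where w': "(w,w') \<in> EH" "w' \<noteq> v" "w' \<noteq> a" by blast
        have "(g0,w') \<in> D" unfolding D_def using w' inH by blast
        moreover have "((g0,w'),p) \<in> XE" using p xg1 g01 symH'[OF w'(1)] by simp
        ultimately show ?thesis by blast
      qed
    qed
  qed
  have "card ({g0} \<times> VH) \<le> card D" using wd_le[OF wd col_min[OF M0] dom] .
  moreover have "card D \<le> card ({g0} \<times> (VH - {v,a})) + 1"
    unfolding D_def using card_Un_le[of "{g0} \<times> (VH - {v,a})" "{(g1,u)}"] by simp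
  moreover have "card ({g0} \<times> (VH - {v,a})) = card VH - 2"
    using finH vV aV av by (simp add: card_cartesian_product card_Diff_subset)
  moreover have "card VH \<ge> 2"
  proof -
    have "card {v,a} \<le> card VH" using finH vV aV by (intro card_mono) auto
    then show ?thesis using av by simp
  qed
  ultimately show False by (simp add: card_cartesian_product)
qed

end

lemma caseII:
  fixes VG :: "'a set" and VH :: "'b set"
  assumes sG: "simple_graph VG EG" and cG: "connected_graph VG EG" and g2: "card VG = 2"
    and sH: "simple_graph VH EH" and cH: "connected_graph VH EH" and h2: "card VH \<ge> 2"
    and wd: "well_dominated (dprod_verts VG VH) (dprod_edges EG EH)"
  shows "graph_iso (dprod_verts VG VH) (dprod_edges EG EH)
                (dprod_verts (K_verts 2) (C_verts 4)) (dprod_edges (K_edges 2) (C_edges 4))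
      \<or> (\<exists>(VF :: nat set) EF. simple_graph VF EF \<and> connected_graph VF EF \<and>
           graph_iso (dprod_verts VG VH) (dprod_edges EG EH)
                (dprod_verts (K_verts 2) (corona_verts VF))
                (dprod_edges (K_edges 2) (corona_edges VF EF)))"
proof -
  obtain g0 g1 where VG: "VG = {g0,g1}" and g0g1: "g0 \<noteq> g1" using g2 by (meson card_2_iff)
  have EGV: "EG \<subseteq> VG \<times> VG" and irrG: "irrefl EG" and symG: "sym EG" using sG unfolding simple_graph_def by auto
  obtain u where g0u: "(g0,u) \<in> EG" using has_nbr[OF sG cG] g2 VG by auto
  have "u \<in> VG" "u \<noteq> g0" using g0u EGV irrG by (auto simp: irrefl_def)
  then have g01: "(g0,g1) \<in> EG" using g0u VG by auto
  have compG: "\<forall>x\<in>VG. \<forall>y\<in>VG. x \<noteq> y \<longrightarrow> (x,y) \<in> EG" using VG g01 symG by (auto dest: symD)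
  have isoG: "graph_iso VG EG (K_verts 2) (K_edges 2)" using complete_iso[OF sG compG g2] .
  interpret twog VG EG VH EH
    using sG sH has_nbr[OF sG cG] has_nbr[OF sH cH h2] g2 by unfold_locales auto
  interpret hgraph VH EH
  proof unfold_locales
    show "simple_graph VH EH" "connected_graph VH EH" "card VH \<ge> 2" by fact+
    show "l1 = l2" if "\<forall>x. (l1,x) \<in> EH \<longleftrightarrow> x = v" "\<forall>x. (l2,x) \<in> EH \<longleftrightarrow> x = v" for v l1 l2
      using II_T[OF wd VG g01 that] .
    show "\<exists>h. (a,h) \<in> EH \<and> h \<noteq> u \<and> (\<forall>x. (h,x) \<in> EH \<longrightarrow> x = a \<or> x = v)"
      if "(v,u) \<in> EH" "(u,a) \<in> EH" "a \<noteq> v" "\<forall>w. (v,w) \<in> EH \<longrightarrow> \<not> leafE EH w" for v u a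
      using II_S[OF wd VG g01 that] .
  qed
  show ?thesis
  proof (cases "\<exists>l\<in>VH. leafE EH l")
    case True
    then obtain VF :: "nat set" and EF where F: "simple_graph VF EF" "connected_graph VF EF"
      "graph_iso VH EH (corona_verts VF) (corona_edges VF EF)" using corona_case by blast
    then show ?thesis using prod_iso[OF isoG F(3)] by blast
  next
    case False
    then have "graph_iso VH EH (C_verts 4) (C_edges 4)" using C4_case by blast
    then show ?thesis using prod_iso[OF isoG] by blast
  qed
qed

lemma caseI:
  fixes VG :: "'a set" and VH :: "'b set"
  assumes sG: "simple_graph VG EG" and cG: "connected_graph VG EG" and g3: "card VG \<ge> 3"
    and sH: "simple_graph VH EH" and cH: "connected_graph VH EH" and h3: "card VH \<ge> 3"
    and wd: "well_dominated (dprod_verts VG VH) (dprod_edges EG EH)"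
  shows "graph_iso (dprod_verts VG VH) (dprod_edges EG EH)
                (dprod_verts (K_verts 3) (K_verts 3)) (dprod_edges (K_edges 3) (K_edges 3))"
proof -
  have g2: "card VG \<ge> 2" and h2: "card VH \<ge> 2" using g3 h3 by auto
  interpret A: twog VG EG VH EH
    using sG sH has_nbr[OF sG cG g2] has_nbr[OF sH cH h2] by unfold_locales auto
  interpret B: twog VH EH VG EG
    using sG sH has_nbr[OF sG cG g2] has_nbr[OF sH cH h2] by unfold_locales auto
  have wd2: "well_dominated (dprod_verts VH VG) (dprod_edges EH EG)"
  proof (rule wd_iso[OF swap_iso _ _ _ wd])
    show "dprod_edges EH EG \<subseteq> dprod_verts VH VG \<times> dprod_verts VH VG"
      by (rule dprod_edges_sub) (use A.EHV A.EGV in auto)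
    show "dprod_edges EG EH \<subseteq> dprod_verts VG VH \<times> dprod_verts VG VH"
      by (rule dprod_edges_sub) (use A.EHV A.EGV in auto)
    show "finite (dprod_verts VH VG)" using A.finG A.finH by (simp add: dprod_verts_def)
  qed
  obtain y z h where H3: "(y,z) \<in> EH" "(z,h) \<in> EH" "h \<noteq> y" using path3[OF sH cH h3] by blast
  obtain y' z' h' where G3: "(y',z') \<in> EG" "(z',h') \<in> EG" "h' \<noteq> y'" using path3[OF sG cG g3] by blast
  have compG: "\<forall>u\<in>VG. \<forall>w\<in>VG. u \<noteq> w \<longrightarrow> (u,w) \<in> EG" using A.half[OF wd cG H3] .
  have compH: "\<forall>u\<in>VH. \<forall>w\<in>VH. u \<noteq> w \<longrightarrow> (u,w) \<in> EH" using B.half[OF wd2 cH G3] .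
  have "card VG = 3 \<and> card VH = 3" using A.Kn[OF wd compG compH g3 h3] .
  then show ?thesis using prod_iso[OF complete_iso[OF sG compG] complete_iso[OF sH compH]] by simp
qed

theorem theorem2:
  fixes VG :: "'a set" and EG :: "('a \<times> 'a) set"
    and VH :: "'b set" and EH :: "('b \<times> 'b) set"
  assumes "simple_graph VG EG" and "connected_graph VG EG" and "card VG \<ge> 2"
    and "simple_graph VH EH" and "connected_graph VH EH" and "card VH \<ge> 2"
  shows "well_dominated (dprod_verts VG VH) (dprod_edges EG EH) \<longleftrightarrow>
     (graph_iso (dprod_verts VG VH) (dprod_edges EG EH)
                (dprod_verts (K_verts 3) (K_verts 3)) (dprod_edges (K_edges 3) (K_edges 3))
      \<or> graph_iso (dprod_verts VG VH) (dprod_edges EG EH)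
                (dprod_verts (K_verts 2) (C_verts 4)) (dprod_edges (K_edges 2) (C_edges 4))
      \<or> (\<exists>(VF :: nat set) EF. simple_graph VF EF \<and> connected_graph VF EF \<and>
           graph_iso (dprod_verts VG VH) (dprod_edges EG EH)
                (dprod_verts (K_verts 2) (corona_verts VF))
                (dprod_edges (K_edges 2) (corona_edges VF EF))))"
proof
  assume wd: "well_dominated (dprod_verts VG VH) (dprod_edges EG EH)"
  have EGV: "EG \<subseteq> VG \<times> VG" and EHV: "EH \<subseteq> VH \<times> VH" and finG: "finite VG" and finH: "finite VH"
    using assms(1,4) unfolding simple_graph_def by auto
  consider "card VG \<ge> 3 \<and> card VH \<ge> 3" | "card VG = 2" | "card VH = 2" using assms(3,6) by linarith
  then show "graph_iso (dprod_verts VG VH) (dprod_edges EG EH)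
                (dprod_verts (K_verts 3) (K_verts 3)) (dprod_edges (K_edges 3) (K_edges 3))
      \<or> graph_iso (dprod_verts VG VH) (dprod_edges EG EH)
                (dprod_verts (K_verts 2) (C_verts 4)) (dprod_edges (K_edges 2) (C_edges 4))
      \<or> (\<exists>(VF :: nat set) EF. simple_graph VF EF \<and> connected_graph VF EF \<and>
           graph_iso (dprod_verts VG VH) (dprod_edges EG EH)
                (dprod_verts (K_verts 2) (corona_verts VF))
                (dprod_edges (K_edges 2) (corona_edges VF EF)))"
  proof cases
    case 1
    then show ?thesis using caseI[OF assms(1,2) _ assms(4,5) _ wd] by blast
  next
    case 2
    then show ?thesis using caseII[OF assms(1,2) _ assms(4,5,6) wd] by blast
  next
    case 3
    have wd2: "well_dominated (dprod_verts VH VG) (dprod_edges EH EG)"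
    proof (rule wd_iso[OF swap_iso _ _ _ wd])
      show "dprod_edges EH EG \<subseteq> dprod_verts VH VG \<times> dprod_verts VH VG"
        by (rule dprod_edges_sub) (use EGV EHV in auto)
      show "dprod_edges EG EH \<subseteq> dprod_verts VG VH \<times> dprod_verts VG VH"
        by (rule dprod_edges_sub) (use EGV EHV in auto)
      show "finite (dprod_verts VH VG)" using finG finH by (simp add: dprod_verts_def)
    qed
    have sw: "graph_iso (dprod_verts VG VH) (dprod_edges EG EH) (dprod_verts VH VG) (dprod_edges EH EG)"
      by (rule swap_iso)
    from caseII[OF assms(4,5) 3 assms(1,2,3) wd2] show ?thesis
    proof
      assume "graph_iso (dprod_verts VH VG) (dprod_edges EH EG)
                (dprod_verts (K_verts 2) (C_verts 4)) (dprod_edges (K_edges 2) (C_edges 4))"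
      then show ?thesis using graph_iso_trans[OF sw] by blast
    next
      assume "\<exists>(VF :: nat set) EF. simple_graph VF EF \<and> connected_graph VF EF \<and>
           graph_iso (dprod_verts VH VG) (dprod_edges EH EG)
                (dprod_verts (K_verts 2) (corona_verts VF))
                (dprod_edges (K_edges 2) (corona_edges VF EF))"
      then obtain VF :: "nat set" and EF where F: "simple_graph VF EF" "connected_graph VF EF"
          "graph_iso (dprod_verts VH VG) (dprod_edges EH EG)
                (dprod_verts (K_verts 2) (corona_verts VF))
                (dprod_edges (K_edges 2) (corona_edges VF EF))" by blast
      have "graph_iso (dprod_verts VG VH) (dprod_edges EG EH)
                (dprod_verts (K_verts 2) (corona_verts VF))
                (dprod_edges (K_edges 2) (corona_edges VF EF))" using graph_iso_trans[OF sw F(3)] .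
      then show ?thesis using F(1,2) by blast
    qed
  qed
next
  have EGV: "EG \<subseteq> VG \<times> VG" and EHV: "EH \<subseteq> VH \<times> VH" and finG: "finite VG" and finH: "finite VH"
    using assms(1,4) unfolding simple_graph_def by auto
  have XE: "dprod_edges EG EH \<subseteq> dprod_verts VG VH \<times> dprod_verts VG VH"
    by (rule dprod_edges_sub) (use EGV EHV in auto)
  have finX: "finite (dprod_verts VG VH)" using finG finH by (simp add: dprod_verts_def)
  have Ksub: "K_edges n \<subseteq> K_verts n \<times> K_verts n" for n by (auto simp: K_edges_def K_verts_def)
  have Csub: "C_edges 4 \<subseteq> C_verts 4 \<times> C_verts 4" by (auto simp: C_edges_def C_verts_def)
  assume "graph_iso (dprod_verts VG VH) (dprod_edges EG EH)
                (dprod_verts (K_verts 3) (K_verts 3)) (dprod_edges (K_edges 3) (K_edges 3))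
      \<or> graph_iso (dprod_verts VG VH) (dprod_edges EG EH)
                (dprod_verts (K_verts 2) (C_verts 4)) (dprod_edges (K_edges 2) (C_edges 4))
      \<or> (\<exists>(VF :: nat set) EF. simple_graph VF EF \<and> connected_graph VF EF \<and>
           graph_iso (dprod_verts VG VH) (dprod_edges EG EH)
                (dprod_verts (K_verts 2) (corona_verts VF))
                (dprod_edges (K_edges 2) (corona_edges VF EF)))"
  then consider
      (a) "graph_iso (dprod_verts VG VH) (dprod_edges EG EH)
                (dprod_verts (K_verts 3) (K_verts 3)) (dprod_edges (K_edges 3) (K_edges 3))"
    | (b) "graph_iso (dprod_verts VG VH) (dprod_edges EG EH)
                (dprod_verts (K_verts 2) (C_verts 4)) (dprod_edges (K_edges 2) (C_edges 4))"
    | (c) VF EF where "simple_graph (VF :: nat set) EF" "graph_iso (dprod_verts VG VH) (dprod_edges EG EH)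
                (dprod_verts (K_verts 2) (corona_verts VF))
                (dprod_edges (K_edges 2) (corona_edges VF EF))"
    by blast
  then show "well_dominated (dprod_verts VG VH) (dprod_edges EG EH)"
  proof cases
    case a
    show ?thesis
      by (rule wd_iso[OF a XE _ finX K3K3_wd]) (rule dprod_edges_sub[OF Ksub Ksub])
  next
    case b
    show ?thesis
      by (rule wd_iso[OF b XE _ finX K2C4_wd]) (rule dprod_edges_sub[OF Ksub Csub])
  next
    case c
    have "EF \<subseteq> VF \<times> VF" using c(1) unfolding simple_graph_def by blast
    then have cs: "corona_edges VF EF \<subseteq> corona_verts VF \<times> corona_verts VF"
      unfolding corona_edges_def corona_verts_def by auto
    show ?thesis
      by (rule wd_iso[OF c(2) XE _ finX K2_corona_wd[OF c(1)]]) (rule dprod_edges_sub[OF Ksub cs])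
  qed
qed

end
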